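(* Let $L$ be a Skolem-free first-order language, $T$ an $L$ theory and $\Gamma$ a set of $L$ formulas. Then $\mathrm{GSI}^\omega_\Gamma(\mathit{sk}^\exists(T))\sqsubseteq_L T+\mathrm{IND}(\Gamma)$, i.e. every $L$ formula provable in $\mathrm{GSI}^\omega_\Gamma(\mathit{sk}^\exists(T))$ is provable in $T+\mathrm{IND}(\Gamma)$.
   Context: Skolem symbols $\mathfrak{s}_{Qx\varphi}$: for each formula $Qx\varphi$ ($Q\in\{\forall,\exists\}$) a new function symbol of arity $|\mathrm{FV}(Qx\varphi)|$; $L$ is Skolem-free if it contains none of the Skolem symbols obtainable (iteratively) over $L$. $\mathit{sk}^\exists$/$\mathit{sk}^\forall$: $\mathit{sk}^Q$ fixes atoms, commutes with $\wedge,\vee$, $\mathit{sk}^Q(\neg A)=\neg\mathit{sk}^{\overline Q}(A)$, $\mathit{sk}^Q(QxA(x,\vec y))=\mathit{sk}^Q(A(\mathfrak{s}_{QxA}(\vec y),\vec y))$ with $\vec y$ exactly the free variables of $QxA$, $\mathit{sk}^Q(\overline QxA)=\overline Qx\,\mathit{sk}^Q(A)$; elementwise on theories. $I_x\varphi=\forall\vec z(\varphi(0,\vec z)\wedge\forall x(\varphi(x,\vec z)\to\varphi(s(x),\vec z))\to\forall x\varphi(x,\vec z))$, $\mathrm{IND}(\Gamma)=\{I_x\gamma:\gamma\in\Gamma\}$. $\Gamma\downarrow L'=\{\gamma(\vec x,t_1,\dots,t_n):\gamma(\vec x,z_1,\dots,z_n)\in\Gamma,\ t_i$ ground $L'$ terms$\}$;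 $\Delta^-$ = formulas of $\Delta$ with at most one free variable; $\mathrm{GSI}_\Gamma(T)=T+\mathit{sk}^\exists(\mathrm{IND}((\Gamma\downarrow L(T))^-))$, $\mathrm{GSI}^\omega_\Gamma(T)=\bigcup_i\mathrm{GSI}^i_\Gamma(T)$ ($i$-fold iterations). *)

theory Defs
  imports Main
begin

section \<open>Syntax of first-order logic with equality (de Bruijn indices)\<close>

datatype qu = QAll | QEx

text \<open>Terms, function symbols and formulas are mutually recursive because a
Skolem symbol is indexed by a formula.  A non-Skolem function symbol
Sym f n carries its arity n; a Skolem symbol Sk q A stands for the symbol
associated with the formula (q x. A), where A is the body (bound variable = index 0).\<close>
datatype ('f,'p) tm = Var nat | App "('f,'p) fs" "('f,'p) tm list"
and ('f,'p) fs = Sym 'f nat | Sk qu "('f,'p) fm"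
and ('f,'p) fm =
    Pr 'p "('f,'p) tm list"
  | Eq "('f,'p) tm" "('f,'p) tm"
  | Neg "('f,'p) fm"
  | Conj "('f,'p) fm" "('f,'p) fm"
  | Disj "('f,'p) fm" "('f,'p) fm"
  | All "('f,'p) fm"
  | Ex "('f,'p) fm"

definition Imp :: "('f,'p) fm \<Rightarrow> ('f,'p) fm \<Rightarrow> ('f,'p) fm" where
  "Imp A B = Disj (Neg A) B"

fun qf :: "qu \<Rightarrow> ('f,'p) fm \<Rightarrow> ('f,'p) fm" where
  "qf QAll A = All A"
| "qf QEx A = Ex A"

fun dualq :: "qu \<Rightarrow> qu" where
  "dualq QAll = QEx"
| "dualq QEx = QAll"

fun fv_tm :: "('f,'p) tm \<Rightarrow> nat set" where
  "fv_tm (Var n) = {n}"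
| "fv_tm (App f ts) = (\<Union>t\<in>set ts. fv_tm t)"

fun fv_fm :: "('f,'p) fm \<Rightarrow> nat set" where
  "fv_fm (Pr p ts) = (\<Union>t\<in>set ts. fv_tm t)"
| "fv_fm (Eq s t) = fv_tm s \<union> fv_tm t"
| "fv_fm (Neg A) = fv_fm A"
| "fv_fm (Conj A B) = fv_fm A \<union> fv_fm B"
| "fv_fm (Disj A B) = fv_fm A \<union> fv_fm B"
| "fv_fm (All A) = {n. Suc n \<in> fv_fm A}"
| "fv_fm (Ex A) = {n. Suc n \<in> fv_fm A}"

fun tsub :: "(nat \<Rightarrow> ('f,'p) tm) \<Rightarrow> ('f,'p) tm \<Rightarrow> ('f,'p) tm" where
  "tsub \<sigma> (Var n) = \<sigma> n"
| "tsub \<sigma> (App f ts) = App f (map (tsub \<sigma>) ts)"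

definition up :: "(nat \<Rightarrow> ('f,'p) tm) \<Rightarrow> nat \<Rightarrow> ('f,'p) tm" where
  "up \<sigma> n = (case n of 0 \<Rightarrow> Var 0 | Suc m \<Rightarrow> tsub (Var \<circ> Suc) (\<sigma> m))"

fun fsub :: "(nat \<Rightarrow> ('f,'p) tm) \<Rightarrow> ('f,'p) fm \<Rightarrow> ('f,'p) fm" where
  "fsub \<sigma> (Pr p ts) = Pr p (map (tsub \<sigma>) ts)"
| "fsub \<sigma> (Eq s t) = Eq (tsub \<sigma> s) (tsub \<sigma> t)"
| "fsub \<sigma> (Neg A) = Neg (fsub \<sigma> A)"
| "fsub \<sigma> (Conj A B) = Conj (fsub \<sigma> A) (fsub \<sigma> B)"
| "fsub \<sigma> (Disj A B) = Disj (fsub \<sigma> A) (fsub \<sigma> B)"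
| "fsub \<sigma> (All A) = All (fsub (up \<sigma>) A)"
| "fsub \<sigma> (Ex A) = Ex (fsub (up \<sigma>) A)"

text \<open>inst t A = A(t): substitute t for the bound variable 0 of a quantifier body.\<close>
definition inst :: "('f,'p) tm \<Rightarrow> ('f,'p) fm \<Rightarrow> ('f,'p) fm" where
  "inst t A = fsub (\<lambda>n. case n of 0 \<Rightarrow> t | Suc m \<Rightarrow> Var m) A"

definition lift :: "('f,'p) fm \<Rightarrow> ('f,'p) fm" where
  "lift A = fsub (Var \<circ> Suc) A"

text \<open>A language is given by a set F of function symbols and a set P of
predicate symbols paired with their arities (equality is logical).\<close>

fun arity :: "('f,'p) fs \<Rightarrow> nat" where
  "arity (Sym f n) = n"
| "arity (Sk q A) = card (fv_fm (qf q A))"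

fun wf_tm :: "('f,'p) fs set \<Rightarrow> ('f,'p) tm \<Rightarrow> bool" where
  "wf_tm F (Var n) = True"
| "wf_tm F (App f ts) = (f \<in> F \<and> length ts = arity f \<and> (\<forall>t\<in>set ts. wf_tm F t))"

fun wf_fm :: "('f,'p) fs set \<Rightarrow> ('p \<times> nat) set \<Rightarrow> ('f,'p) fm \<Rightarrow> bool" where
  "wf_fm F P (Pr p ts) = ((p, length ts) \<in> P \<and> (\<forall>t\<in>set ts. wf_tm F t))"
| "wf_fm F P (Eq s t) = (wf_tm F s \<and> wf_tm F t)"
| "wf_fm F P (Neg A) = wf_fm F P A"
| "wf_fm F P (Conj A B) = (wf_fm F P A \<and> wf_fm F P B)"
| "wf_fm F P (Disj A B) = (wf_fm F P A \<and> wf_fm F P B)"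
| "wf_fm F P (All A) = wf_fm F P A"
| "wf_fm F P (Ex A) = wf_fm F P A"

primrec skolem_stage :: "('f,'p) fs set \<Rightarrow> ('p \<times> nat) set \<Rightarrow> nat \<Rightarrow> ('f,'p) fs set" where
  "skolem_stage F P 0 = {}"
| "skolem_stage F P (Suc i) =
     {Sk q A | q A. wf_fm (F \<union> skolem_stage F P i) P (qf q A)}"

definition skolems :: "('f,'p) fs set \<Rightarrow> ('p \<times> nat) set \<Rightarrow> ('f,'p) fs set" where
  "skolems F P = (\<Union>i. skolem_stage F P i)"

definition skolem_free :: "('f,'p) fs set \<Rightarrow> ('p \<times> nat) set \<Rightarrow> bool" where
  "skolem_free F P \<longleftrightarrow> F \<inter> skolems F P = {}"

fun syms_tm :: "('f,'p) tm \<Rightarrow> ('f,'p) fs set" where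
  "syms_tm (Var n) = {}"
| "syms_tm (App f ts) = insert f (\<Union>t\<in>set ts. syms_tm t)"

fun syms_fm :: "('f,'p) fm \<Rightarrow> ('f,'p) fs set" where
  "syms_fm (Pr p ts) = (\<Union>t\<in>set ts. syms_tm t)"
| "syms_fm (Eq s t) = syms_tm s \<union> syms_tm t"
| "syms_fm (Neg A) = syms_fm A"
| "syms_fm (Conj A B) = syms_fm A \<union> syms_fm B"
| "syms_fm (Disj A B) = syms_fm A \<union> syms_fm B"
| "syms_fm (All A) = syms_fm A"
| "syms_fm (Ex A) = syms_fm A"

fun fsize :: "('f,'p) fm \<Rightarrow> nat" where
  "fsize (Pr p ts) = 1"
| "fsize (Eq s t) = 1"
| "fsize (Neg A) = Suc (fsize A)"
| "fsize (Conj A B) = Suc (fsize A + fsize B)"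
| "fsize (Disj A B) = Suc (fsize A + fsize B)"
| "fsize (All A) = Suc (fsize A)"
| "fsize (Ex A) = Suc (fsize A)"

lemma fsize_fsub[simp]: "fsize (fsub \<sigma> A) = fsize A"
  by (induction A arbitrary: \<sigma>) auto

lemma fsize_inst[simp]: "fsize (inst t A) = fsize A"
  by (simp add: inst_def)

text \<open>The Skolem term s_{QxA}(y1,...,yk), the yi being exactly the free
variables of QxA in increasing order.\<close>
definition skterm :: "qu \<Rightarrow> ('f,'p) fm \<Rightarrow> ('f,'p) tm" where
  "skterm q A = App (Sk q A) (map Var (sorted_list_of_set (fv_fm (qf q A))))"

function sk :: "qu \<Rightarrow> ('f,'p) fm \<Rightarrow> ('f,'p) fm" where
  "sk q (Pr p ts) = Pr p ts"
| "sk q (Eq s t) = Eq s t"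
| "sk q (Neg A) = Neg (sk (dualq q) A)"
| "sk q (Conj A B) = Conj (sk q A) (sk q B)"
| "sk q (Disj A B) = Disj (sk q A) (sk q B)"
| "sk q (All A) = (if q = QAll then sk q (inst (skterm QAll A) A) else All (sk q A))"
| "sk q (Ex A) = (if q = QEx then sk q (inst (skterm QEx A) A) else Ex (sk q A))"
  by pat_completeness auto
termination
  by (relation "measure (\<lambda>(q, A). fsize A)") auto

text \<open>I_x phi = forall zs (phi(0,zs) /\ forall x (phi(x,zs) --> phi(s(x),zs)) --> forall x phi(x,zs)),
zs being exactly the free variables of phi other than x.  Zero and successor
are the symbols Sym z 0 and Sym s 1.\<close>
definition ind_ax :: "'f \<Rightarrow> 'f \<Rightarrow> nat \<Rightarrow> ('f,'p) fm \<Rightarrow> ('f,'p) fm" where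
  "ind_ax z s x \<phi> =
    (let Z = fv_fm \<phi> - {x};
         k = card Z;
         \<psi> = fsub (\<lambda>n. if n = x then Var 0 else Var (Suc (card {m \<in> Z. m < n}))) \<phi>;
         base = fsub (\<lambda>n. case n of 0 \<Rightarrow> App (Sym z 0) [] | Suc m \<Rightarrow> Var m) \<psi>;
         stp = All (Imp \<psi> (fsub (\<lambda>n. case n of 0 \<Rightarrow> App (Sym s 1) [Var 0] | Suc m \<Rightarrow> Var (Suc m)) \<psi>))
     in (All ^^ k) (Imp (Conj base stp) (All \<psi>)))"

definition IND :: "'f \<Rightarrow> 'f \<Rightarrow> ('f,'p) fm set \<Rightarrow> ('f,'p) fm set" where
  "IND z s \<Gamma> = {ind_ax z s x \<gamma> | x \<gamma>. \<gamma> \<in> \<Gamma>}"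

text \<open>Gamma restricted to L': replace some free variables by ground L' terms.\<close>
definition down :: "('f,'p) fm set \<Rightarrow> ('f,'p) fs set \<Rightarrow> ('f,'p) fm set" where
  "down \<Gamma> L' = {fsub \<sigma> \<gamma> | \<sigma> \<gamma>. \<gamma> \<in> \<Gamma> \<and>
       (\<forall>n. \<sigma> n = Var n \<or> (wf_tm L' (\<sigma> n) \<and> fv_tm (\<sigma> n) = {}))}"

definition minus :: "('f,'p) fm set \<Rightarrow> ('f,'p) fm set" where
  "minus \<Delta> = {\<delta> \<in> \<Delta>. card (fv_fm \<delta>) \<le> 1}"

text \<open>The language L(T) of a theory T extending the base language F: F together
with all function symbols occurring in T.\<close>
definition lang :: "('f,'p) fs set \<Rightarrow> ('f,'p) fm set \<Rightarrow> ('f,'p) fs set" where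
  "lang F T = F \<union> (\<Union>A\<in>T. syms_fm A)"

definition GSI :: "('f,'p) fs set \<Rightarrow> 'f \<Rightarrow> 'f \<Rightarrow> ('f,'p) fm set \<Rightarrow> ('f,'p) fm set \<Rightarrow> ('f,'p) fm set" where
  "GSI F z s \<Gamma> T = T \<union> sk QEx ` IND z s (minus (down \<Gamma> (lang F T)))"

definition GSI_omega :: "('f,'p) fs set \<Rightarrow> 'f \<Rightarrow> 'f \<Rightarrow> ('f,'p) fm set \<Rightarrow> ('f,'p) fm set \<Rightarrow> ('f,'p) fm set" where
  "GSI_omega F z s \<Gamma> T = (\<Union>i. (GSI F z s \<Gamma> ^^ i) T)"

inductive nd :: "('f,'p) fm list \<Rightarrow> ('f,'p) fm \<Rightarrow> bool" where
  Assm: "A \<in> set G \<Longrightarrow> nd G A"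
| ConjI: "nd G A \<Longrightarrow> nd G B \<Longrightarrow> nd G (Conj A B)"
| ConjE1: "nd G (Conj A B) \<Longrightarrow> nd G A"
| ConjE2: "nd G (Conj A B) \<Longrightarrow> nd G B"
| DisjI1: "nd G A \<Longrightarrow> nd G (Disj A B)"
| DisjI2: "nd G B \<Longrightarrow> nd G (Disj A B)"
| DisjE: "nd G (Disj A B) \<Longrightarrow> nd (A # G) C \<Longrightarrow> nd (B # G) C \<Longrightarrow> nd G C"
| NegI: "nd (A # G) B \<Longrightarrow> nd (A # G) (Neg B) \<Longrightarrow> nd G (Neg A)"
| Class: "nd (Neg A # G) B \<Longrightarrow> nd (Neg A # G) (Neg B) \<Longrightarrow> nd G A"
| AllI: "nd (map lift G) A \<Longrightarrow> nd G (All A)"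
| AllE: "nd G (All A) \<Longrightarrow> nd G (inst t A)"
| ExI: "nd G (inst t A) \<Longrightarrow> nd G (Ex A)"
| ExE: "nd G (Ex A) \<Longrightarrow> nd (A # map lift G) (lift B) \<Longrightarrow> nd G B"
| Refl: "nd G (Eq t t)"
| Subst: "nd G (Eq t u) \<Longrightarrow> nd G (inst t A) \<Longrightarrow> nd G (inst u A)"

definition prov :: "('f,'p) fm set \<Rightarrow> ('f,'p) fm \<Rightarrow> bool" where
  "prov T A \<longleftrightarrow> (\<exists>G. set G \<subseteq> T \<and> nd G A)"

end

theory Submission
  imports Defs
begin

lemma up_0[simp]: "up \<sigma> 0 = Var 0" by (simp add: up_def)
lemma up_Suc[simp]: "up \<sigma> (Suc m) = tsub (Var \<circ> Suc) (\<sigma> m)" by (simp add: up_def)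

lemma tsub_tsub: "tsub \<sigma> (tsub \<tau> t) = tsub (\<lambda>n. tsub \<sigma> (\<tau> n)) t"
  by (induction t rule: fv_tm.induct) auto

lemma tsub_Var[simp]: "tsub Var t = t"
  by (induction t rule: fv_tm.induct) (auto simp: map_idI)

lemma tsub_cong: "(\<And>n. n \<in> fv_tm t \<Longrightarrow> \<sigma> n = \<tau> n) \<Longrightarrow> tsub \<sigma> t = tsub \<tau> t"
  by (induction t rule: fv_tm.induct) auto

lemma fv_tsub: "fv_tm (tsub \<sigma> t) = (\<Union>n\<in>fv_tm t. fv_tm (\<sigma> n))"
  by (induction t rule: fv_tm.induct) auto

lemma up_comp: "up (\<lambda>n. tsub \<sigma> (\<tau> n)) = (\<lambda>n. tsub (up \<sigma>) (up \<tau> n))"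
  by (rule ext, case_tac n) (auto simp: tsub_tsub)

lemma fsub_fsub: "fsub \<sigma> (fsub \<tau> A) = fsub (\<lambda>n. tsub \<sigma> (\<tau> n)) A"
  by (induction A arbitrary: \<sigma> \<tau> rule: fsize.induct) (auto simp: tsub_tsub up_comp)

lemma up_Var[simp]: "up Var = Var"
  by (auto simp: fun_eq_iff up_def split: nat.splits)

lemma fsub_Var[simp]: "fsub Var A = A"
  by (induction A rule: fsize.induct) (auto simp: map_idI)

lemma fsub_cong: "(\<And>n. n \<in> fv_fm A \<Longrightarrow> \<sigma> n = \<tau> n) \<Longrightarrow> fsub \<sigma> A = fsub \<tau> A"
proof (induction A arbitrary: \<sigma> \<tau> rule: fsize.induct)
  case (1 p ts)
  have "map (tsub \<sigma>) ts = map (tsub \<tau>) ts"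
  proof (rule map_cong[OF refl])
    fix t assume "t \<in> set ts"
    then show "tsub \<sigma> t = tsub \<tau> t" using 1 by (intro tsub_cong) auto
  qed
  then show ?case by simp
next
  case (2 t u)
  have "tsub \<sigma> t = tsub \<tau> t" using 2 by (intro tsub_cong) auto
  moreover have "tsub \<sigma> u = tsub \<tau> u" using 2 by (intro tsub_cong) auto
  ultimately show ?case by simp
next
  case (3 A)
  have "fsub \<sigma> A = fsub \<tau> A" by (rule 3(1)) (use 3(2) in auto)
  then show ?case by simp
next
  case (4 A B)
  have "fsub \<sigma> A = fsub \<tau> A" by (rule 4(1)) (use 4(3) in auto)
  moreover have "fsub \<sigma> B = fsub \<tau> B" by (rule 4(2)) (use 4(3) in auto)
  ultimately show ?case by simp
next
  case (5 A B)
  have "fsub \<sigma> A = fsub \<tau> A" by (rule 5(1)) (use 5(3) in auto)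
  moreover have "fsub \<sigma> B = fsub \<tau> B" by (rule 5(2)) (use 5(3) in auto)
  ultimately show ?case by simp
next
  case (6 A)
  have "up \<sigma> n = up \<tau> n" if "n \<in> fv_fm A" for n
    using 6(2) that by (cases n) auto
  then have "fsub (up \<sigma>) A = fsub (up \<tau>) A" by (rule 6(1))
  then show ?case by simp
next
  case (7 A)
  have "up \<sigma> n = up \<tau> n" if "n \<in> fv_fm A" for n
    using 7(2) that by (cases n) auto
  then have "fsub (up \<sigma>) A = fsub (up \<tau>) A" by (rule 7(1))
  then show ?case by simp
qed

lemma fv_up: "fv_tm (up \<sigma> n) = (case n of 0 \<Rightarrow> {0} | Suc m \<Rightarrow> Suc ` fv_tm (\<sigma> m))"
  by (cases n) (auto simp: fv_tsub)

lemma Suc_fv_up: "Suc m \<in> fv_tm (up \<sigma> n) \<longleftrightarrow> (\<exists>k. n = Suc k \<and> m \<in> fv_tm (\<sigma> k))"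
  by (cases n) (auto simp: fv_tsub)

lemma fv_fsub: "fv_fm (fsub \<sigma> A) = (\<Union>n\<in>fv_fm A. fv_tm (\<sigma> n))"
proof (induction A arbitrary: \<sigma> rule: fsize.induct)
  case (6 A)
  have "fv_fm (fsub (up \<sigma>) A) = (\<Union>n\<in>fv_fm A. fv_tm (up \<sigma> n))" by (rule 6)
  then show ?case by (auto simp: Suc_fv_up)
next
  case (7 A)
  have "fv_fm (fsub (up \<sigma>) A) = (\<Union>n\<in>fv_fm A. fv_tm (up \<sigma> n))" by (rule 7)
  then show ?case by (auto simp: Suc_fv_up)
qed (auto simp: fv_tsub)

lemma closed_fsub: "fv_fm A = {} \<Longrightarrow> fsub \<sigma> A = A"
  using fsub_cong[of A \<sigma> Var] by simp

lemma closed_tsub: "fv_tm t = {} \<Longrightarrow> tsub \<sigma> t = t"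
  using tsub_cong[of t \<sigma> Var] by simp

lemma finite_fv_tm[simp]: "finite (fv_tm t)"
  by (induction t rule: fv_tm.induct) auto

lemma finite_fv_fm[simp]: "finite (fv_fm A)"
proof (induction A rule: fsize.induct)
  case (6 A)
  then show ?case using finite_vimageI[of "fv_fm A" Suc] by (simp add: vimage_def inj_on_def)
next
  case (7 A)
  then show ?case using finite_vimageI[of "fv_fm A" Suc] by (simp add: vimage_def inj_on_def)
qed auto

lemma lift_closed: "fv_fm A = {} \<Longrightarrow> lift A = A"
  by (simp add: lift_def closed_fsub)

lemma fsub_lift: "fsub (up \<sigma>) (lift B) = lift (fsub \<sigma> B)"
  by (simp add: lift_def fsub_fsub)

lemma fsub_inst: "fsub \<sigma> (inst t A) = inst (tsub \<sigma> t) (fsub (up \<sigma>) A)"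
  unfolding inst_def fsub_fsub
  by (rule fsub_cong) (auto split: nat.splits simp: tsub_tsub)

lemma inst_Var0_lifted_aux: "tsub (case_nat (Var 0) Var) (up (Var \<circ> Suc) n) = Var n"
  by (cases n) auto

lemma inst_Var0_lifted: "inst (Var 0) (fsub (up (Var \<circ> Suc)) A) = A"
proof -
  have "inst (Var 0) (fsub (up (Var \<circ> Suc)) A) = fsub Var A"
    unfolding inst_def fsub_fsub
    by (rule fsub_cong) (simp add: inst_Var0_lifted_aux)
  then show ?thesis by simp
qed

lemma inst_Var0_small: "fv_fm A \<subseteq> {0} \<Longrightarrow> inst (Var 0) A = A"
proof -
  assume a: "fv_fm A \<subseteq> {0}"
  have "inst (Var 0) A = fsub Var A"
    unfolding inst_def by (rule fsub_cong) (use a in \<open>auto split: nat.splits\<close>)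
  then show ?thesis by simp
qed

lemma fv_inst_closed: "fv_tm t = {} \<Longrightarrow> fv_fm A \<subseteq> {0} \<Longrightarrow> fv_fm (inst t A) = {}"
  unfolding inst_def fv_fsub by (auto split: nat.splits)

lemma wf_tm_syms: "wf_tm X t \<Longrightarrow> syms_tm t \<subseteq> X"
  by (induction t rule: fv_tm.induct) auto

lemma wf_tm_mono_syms: "wf_tm X t \<Longrightarrow> syms_tm t \<subseteq> Y \<Longrightarrow> wf_tm Y t"
  by (induction t rule: fv_tm.induct) auto

lemma wf_fm_syms: "wf_fm X P A \<Longrightarrow> syms_fm A \<subseteq> X"
  by (induction A rule: fsize.induct) (auto dest: wf_tm_syms)

lemma wf_fm_mono_syms: "wf_fm X P A \<Longrightarrow> syms_fm A \<subseteq> Y \<Longrightarrow> wf_fm Y P A"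
  by (induction A rule: fsize.induct) (auto intro: wf_tm_mono_syms)

lemma wf_fm_mono: "wf_fm X P A \<Longrightarrow> X \<subseteq> Y \<Longrightarrow> wf_fm Y P A"
  using wf_fm_mono_syms wf_fm_syms by blast

lemma wf_tm_mono: "wf_tm X t \<Longrightarrow> X \<subseteq> Y \<Longrightarrow> wf_tm Y t"
  using wf_tm_mono_syms wf_tm_syms by blast

lemma finite_syms_tm[simp]: "finite (syms_tm t)"
  by (induction t rule: fv_tm.induct) auto

lemma finite_syms_fm[simp]: "finite (syms_fm A)"
  by (induction A rule: fsize.induct) auto

lemma wf_tsub: "wf_tm X t \<Longrightarrow> (\<And>n. wf_tm X (\<sigma> n)) \<Longrightarrow> wf_tm X (tsub \<sigma> t)"
  by (induction t rule: fv_tm.induct) auto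

lemma wf_up: "(\<And>n. wf_tm X (\<sigma> n)) \<Longrightarrow> wf_tm X (up \<sigma> n)"
  by (cases n) (auto intro: wf_tsub)

lemma wf_fsub: "wf_fm X P A \<Longrightarrow> (\<And>n. wf_tm X (\<sigma> n)) \<Longrightarrow> wf_fm X P (fsub \<sigma> A)"
proof (induction A arbitrary: \<sigma> rule: fsize.induct)
qed (auto intro: wf_tsub wf_up)

lemma wf_inst: "wf_fm X P A \<Longrightarrow> wf_tm X t \<Longrightarrow> wf_fm X P (inst t A)"
  unfolding inst_def by (rule wf_fsub) (auto split: nat.splits)

lemma size_syms_tm: "f \<in> syms_tm t \<Longrightarrow> size f < size t"
proof (induction t rule: fv_tm.induct)
  case (2 g ts)
  show ?case
  proof (cases "f = g")
    case False
    then obtain t where t: "t \<in> set ts" "f \<in> syms_tm t" using 2(2) by auto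
    have "size f < size t" using 2(1)[OF t] .
    moreover have "size t \<le> size_list size ts" by (rule size_list_estimation'[OF t(1)]) simp
    ultimately show ?thesis by simp
  qed simp
qed simp

lemma size_syms_fm: "f \<in> syms_fm A \<Longrightarrow> size f < size A"
proof (induction A rule: fsize.induct)
  case (1 p ts)
  then obtain t where t: "t \<in> set ts" "f \<in> syms_tm t" by auto
  have "size f < size t" using size_syms_tm[OF t(2)] .
  moreover have "size t \<le> size_list size ts" by (rule size_list_estimation'[OF t(1)]) simp
  ultimately show ?case by simp
qed (auto dest!: size_syms_tm)

lemma syms_tsub: "syms_tm (tsub \<sigma> t) \<subseteq> syms_tm t \<union> (\<Union>n. syms_tm (\<sigma> n))"
  by (induction t rule: fv_tm.induct) auto

lemma syms_up: "syms_tm (up \<sigma> n) \<subseteq> (\<Union>n. syms_tm (\<sigma> n))"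
proof (cases n)
  case (Suc m)
  have "syms_tm (tsub (Var \<circ> Suc) (\<sigma> m)) \<subseteq> syms_tm (\<sigma> m)"
    using syms_tsub[of "Var \<circ> Suc" "\<sigma> m"] by simp
  then show ?thesis using Suc by auto
qed simp

lemma syms_fsub: "syms_fm (fsub \<sigma> A) \<subseteq> syms_fm A \<union> (\<Union>n. syms_tm (\<sigma> n))"
proof (induction A arbitrary: \<sigma> rule: fsize.induct)
  case (1 p ts)
  show ?case using syms_tsub[of \<sigma>] by (simp, blast)
next
  case (2 t u)
  show ?case using syms_tsub[of \<sigma>] by (simp, blast)
next
  case (6 A)
  have "syms_fm (fsub (up \<sigma>) A) \<subseteq> syms_fm A \<union> (\<Union>n. syms_tm (up \<sigma> n))" by (rule 6)
  moreover have "(\<Union>n. syms_tm (up \<sigma> n)) \<subseteq> (\<Union>n. syms_tm (\<sigma> n))" using syms_up[of \<sigma>] by blast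
  ultimately show ?case by simp blast
next
  case (7 A)
  have "syms_fm (fsub (up \<sigma>) A) \<subseteq> syms_fm A \<union> (\<Union>n. syms_tm (up \<sigma> n))" by (rule 7)
  moreover have "(\<Union>n. syms_tm (up \<sigma> n)) \<subseteq> (\<Union>n. syms_tm (\<sigma> n))" using syms_up[of \<sigma>] by blast
  ultimately show ?case by simp blast
qed (simp; blast)+

lemma syms_inst: "syms_fm (inst t A) \<subseteq> syms_fm A \<union> syms_tm t"
proof -
  have "(\<Union>n. syms_tm ((\<lambda>n. case n of 0 \<Rightarrow> t | Suc m \<Rightarrow> Var m) n)) \<subseteq> syms_tm t"
    by (auto split: nat.splits)
  then show ?thesis unfolding inst_def using syms_fsub[of _ A] by blast
qed

lemma nd_weaken: "nd G A \<Longrightarrow> set G \<subseteq> set G' \<Longrightarrow> nd G' A"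
proof (induction G A arbitrary: G' rule: nd.induct)
  case (Assm A G) then show ?case by (auto intro: nd.Assm)
next
  case (ConjI G A B) then show ?case by (auto intro: nd.ConjI)
next
  case (ConjE1 G A B) then show ?case by (meson nd.ConjE1)
next
  case (ConjE2 G A B) then show ?case by (meson nd.ConjE2)
next
  case (DisjI1 G A B) then show ?case by (meson nd.DisjI1)
next
  case (DisjI2 G B A) then show ?case by (meson nd.DisjI2)
next
  case (DisjE G A B C)
  have "nd (A # G') C" by (rule DisjE(5)) (use DisjE(7) in auto)
  moreover have "nd (B # G') C" by (rule DisjE(6)) (use DisjE(7) in auto)
  ultimately show ?case using DisjE(4)[OF DisjE(7)] by (meson nd.DisjE)
next
  case (NegI A G B)
  have "nd (A # G') B" by (rule NegI(3)) (use NegI(5) in auto)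
  moreover have "nd (A # G') (Neg B)" by (rule NegI(4)) (use NegI(5) in auto)
  ultimately show ?case by (meson nd.NegI)
next
  case (Class A G B)
  have "nd (Neg A # G') B" by (rule Class(3)) (use Class(5) in auto)
  moreover have "nd (Neg A # G') (Neg B)" by (rule Class(4)) (use Class(5) in auto)
  ultimately show ?case by (meson nd.Class)
next
  case (AllI G A)
  have "nd (map lift G') A" by (rule AllI(2)) (use AllI(3) in auto)
  then show ?case by (rule nd.AllI)
next
  case (AllE G A t) then show ?case by (meson nd.AllE)
next
  case (ExI G t A) then show ?case by (meson nd.ExI)
next
  case (ExE G A B)
  have "nd (A # map lift G') (lift B)" by (rule ExE(4)) (use ExE(5) in auto)
  then show ?case using ExE(3)[OF ExE(5)] by (meson nd.ExE)
next
  case (Refl G t) show ?case by (rule nd.Refl)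
next
  case (Subst G t u A) then show ?case by (meson nd.Subst)
qed

lemma nd_cut: "nd G A \<Longrightarrow> nd (A # G) B \<Longrightarrow> nd G B"
  by (meson nd.DisjE nd.DisjI1)

lemma nd_explode: "nd G A \<Longrightarrow> nd G (Neg A) \<Longrightarrow> nd G B"
proof -
  assume a: "nd G A" "nd G (Neg A)"
  have "nd (Neg B # G) A" by (rule nd_weaken[OF a(1)]) auto
  moreover have "nd (Neg B # G) (Neg A)" by (rule nd_weaken[OF a(2)]) auto
  ultimately show ?thesis by (rule nd.Class)
qed

lemma nd_lem: "nd G (Disj A (Neg A))"
proof (rule nd.Class)
  let ?N = "Neg (Disj A (Neg A))"
  have "nd (A # ?N # G) (Disj A (Neg A))" by (rule nd.DisjI1) (rule nd.Assm, simp)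
  moreover have "nd (A # ?N # G) ?N" by (rule nd.Assm) simp
  ultimately have "nd (?N # G) (Neg A)" by (rule nd.NegI)
  then show "nd (?N # G) (Disj A (Neg A))" by (rule nd.DisjI2)
  show "nd (?N # G) ?N" by (rule nd.Assm) simp
qed

lemma nd_mp: "nd G (Imp A B) \<Longrightarrow> nd G A \<Longrightarrow> nd G B"
proof -
  assume a: "nd G (Imp A B)" "nd G A"
  have "nd (Neg A # G) B"
    by (rule nd_explode[of _ A]) (rule nd_weaken[OF a(2)], auto intro: nd.Assm)
  moreover have "nd (B # G) B" by (rule nd.Assm) simp
  ultimately show ?thesis using a(1) unfolding Imp_def by (meson nd.DisjE)
qed

lemma nd_case: "nd (A # G) B \<Longrightarrow> nd (Neg A # G) B \<Longrightarrow> nd G B"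
  using nd_lem by (meson nd.DisjE)

lemma nd_fsub: "nd G A \<Longrightarrow> nd (map (fsub \<sigma>) G) (fsub \<sigma> A)"
proof (induction G A arbitrary: \<sigma> rule: nd.induct)
  case (Assm A G) then show ?case by (auto intro: nd.Assm)
next
  case (ConjI G A B) then show ?case by (auto intro: nd.ConjI)
next
  case (ConjE1 G A B) then show ?case by (metis fsub.simps(4) nd.ConjE1)
next
  case (ConjE2 G A B) then show ?case by (metis fsub.simps(4) nd.ConjE2)
next
  case (DisjI1 G A B) then show ?case by (metis fsub.simps(5) nd.DisjI1)
next
  case (DisjI2 G B A) then show ?case by (metis fsub.simps(5) nd.DisjI2)
next
  case (DisjE G A B C)
  show ?case using DisjE(4)[of \<sigma>] DisjE(5)[of \<sigma>] DisjE(6)[of \<sigma>] by (auto intro: nd.DisjE)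
next
  case (NegI A G B)
  show ?case using NegI(3)[of \<sigma>] NegI(4)[of \<sigma>] by (auto intro: nd.NegI)
next
  case (Class A G B)
  show ?case using Class(3)[of \<sigma>] Class(4)[of \<sigma>] by (auto intro: nd.Class)
next
  case (AllI G A)
  have e: "map (fsub (up \<sigma>)) (map lift G) = map lift (map (fsub \<sigma>) G)"
    by (induction G) (simp_all add: fsub_lift)
  have "nd (map lift (map (fsub \<sigma>) G)) (fsub (up \<sigma>) A)"
    using AllI(2)[of "up \<sigma>"] by (simp only: e)
  then show ?case by (simp add: nd.AllI)
next
  case (AllE G A t)
  have "nd (map (fsub \<sigma>) G) (All (fsub (up \<sigma>) A))" using AllE(2)[of \<sigma>] by simp
  then show ?case by (simp add: fsub_inst nd.AllE)
next
  case (ExI G t A)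
  have "nd (map (fsub \<sigma>) G) (inst (tsub \<sigma> t) (fsub (up \<sigma>) A))" using ExI(2)[of \<sigma>] by (simp add: fsub_inst)
  then show ?case by (simp add: nd.ExI)
next
  case (ExE G A B)
  have e: "map (fsub (up \<sigma>)) (map lift G) = map lift (map (fsub \<sigma>) G)"
    by (induction G) (simp_all add: fsub_lift)
  have "nd (fsub (up \<sigma>) A # map (fsub (up \<sigma>)) (map lift G)) (fsub (up \<sigma>) (lift B))" using ExE(4)[of "up \<sigma>"] by simp
  then have "nd (fsub (up \<sigma>) A # map lift (map (fsub \<sigma>) G)) (lift (fsub \<sigma> B))" by (simp only: e fsub_lift)
  moreover have "nd (map (fsub \<sigma>) G) (Ex (fsub (up \<sigma>) A))" using ExE(3)[of \<sigma>] by simp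
  ultimately show ?case by (meson nd.ExE)
next
  case (Refl G t) then show ?case by (simp add: nd.Refl)
next
  case (Subst G t u A)
  have "nd (map (fsub \<sigma>) G) (Eq (tsub \<sigma> t) (tsub \<sigma> u))" using Subst(3)[of \<sigma>] by simp
  moreover have "nd (map (fsub \<sigma>) G) (inst (tsub \<sigma> t) (fsub (up \<sigma>) A))" using Subst(4)[of \<sigma>] by (simp add: fsub_inst)
  ultimately show ?case by (simp add: fsub_inst nd.Subst)
qed

lemma nd_All_strip: "nd G (All A) \<Longrightarrow> \<forall>B\<in>set G. fv_fm B = {} \<Longrightarrow> nd G A"
proof -
  assume a: "nd G (All A)" "\<forall>B\<in>set G. fv_fm B = {}"
  have "nd (map (fsub (Var \<circ> Suc)) G) (fsub (Var \<circ> Suc) (All A))" using nd_fsub[OF a(1), of "Var \<circ> Suc"] .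
  moreover have "map (fsub (Var \<circ> Suc)) G = G" using a(2) by (induction G) (auto simp: closed_fsub)
  ultimately have "nd G (All (fsub (up (Var \<circ> Suc)) A))" by simp
  then have "nd G (inst (Var 0) (fsub (up (Var \<circ> Suc)) A))" by (rule nd.AllE)
  then show ?thesis by (simp add: inst_Var0_lifted)
qed

lemma nd_Alls_strip: "nd G ((All ^^ k) A) \<Longrightarrow> \<forall>B\<in>set G. fv_fm B = {} \<Longrightarrow> nd G A"
  by (induction k) (auto dest: nd_All_strip)

lemma fv_Alls: "fv_fm ((All ^^ k) A) = {n. n + k \<in> fv_fm A}"
  by (induction k arbitrary: A) auto

lemma wf_Alls: "wf_fm X P ((All ^^ k) A) = wf_fm X P A"
  by (induction k) auto

section \<open>Replacing a symbol by a variable\<close>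

fun rt :: "('f,'p) fs \<Rightarrow> nat \<Rightarrow> ('f,'p) tm \<Rightarrow> ('f,'p) tm" where
  "rt c j (Var n) = Var n"
| "rt c j (App f ts) = (if f = c then Var j else App f (map (rt c j) ts))"

fun rf :: "('f,'p) fs \<Rightarrow> nat \<Rightarrow> ('f,'p) fm \<Rightarrow> ('f,'p) fm" where
  "rf c j (Pr p ts) = Pr p (map (rt c j) ts)"
| "rf c j (Eq s t) = Eq (rt c j s) (rt c j t)"
| "rf c j (Neg A) = Neg (rf c j A)"
| "rf c j (Conj A B) = Conj (rf c j A) (rf c j B)"
| "rf c j (Disj A B) = Disj (rf c j A) (rf c j B)"
| "rf c j (All A) = All (rf c (Suc j) A)"
| "rf c j (Ex A) = Ex (rf c (Suc j) A)"

lemma rt_tsub: "rt c j2 (\<sigma> j1) = Var j2 \<Longrightarrow> rt c j2 (tsub \<sigma> t) = tsub (\<lambda>n. rt c j2 (\<sigma> n)) (rt c j1 t)"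
  by (induction t rule: fv_tm.induct) auto

lemma rt_lift: "rt c (Suc j) (tsub (Var \<circ> Suc) u) = tsub (Var \<circ> Suc) (rt c j u)"
proof -
  have "rt c (Suc j) (tsub (Var \<circ> Suc) u) = tsub (\<lambda>n. rt c (Suc j) ((Var \<circ> Suc) n)) (rt c j u)"
    by (rule rt_tsub) simp
  then show ?thesis by (simp add: comp_def)
qed

lemma rt_up: "(\<lambda>n. rt c (Suc j) (up \<sigma> n)) = up (\<lambda>n. rt c j (\<sigma> n))"
proof
  fix n show "rt c (Suc j) (up \<sigma> n) = up (\<lambda>n. rt c j (\<sigma> n)) n"
    by (cases n) (auto simp: rt_lift)
qed

lemma rf_fsub: "rt c j2 (\<sigma> j1) = Var j2 \<Longrightarrow> rf c j2 (fsub \<sigma> A) = fsub (\<lambda>n. rt c j2 (\<sigma> n)) (rf c j1 A)"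
proof (induction A arbitrary: \<sigma> j1 j2 rule: fsize.induct)
  case (6 A)
  have c: "rt c (Suc j2) (up \<sigma> (Suc j1)) = Var (Suc j2)" using 6(2) by (simp add: rt_lift)
  have "rf c (Suc j2) (fsub (up \<sigma>) A) = fsub (\<lambda>n. rt c (Suc j2) (up \<sigma> n)) (rf c (Suc j1) A)"
    by (rule 6(1)) (rule c)
  then show ?case by (simp add: rt_up)
next
  case (7 A)
  have c: "rt c (Suc j2) (up \<sigma> (Suc j1)) = Var (Suc j2)" using 7(2) by (simp add: rt_lift)
  have "rf c (Suc j2) (fsub (up \<sigma>) A) = fsub (\<lambda>n. rt c (Suc j2) (up \<sigma> n)) (rf c (Suc j1) A)"
    by (rule 7(1)) (rule c)
  then show ?case by (simp add: rt_up)
qed (auto simp: rt_tsub)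

lemma rf_lift: "rf c (Suc j) (lift B) = lift (rf c j B)"
proof -
  have "rf c (Suc j) (lift B) = fsub (\<lambda>n. rt c (Suc j) ((Var \<circ> Suc) n)) (rf c j B)"
    unfolding lift_def by (rule rf_fsub) simp
  then show ?thesis by (simp add: lift_def comp_def)
qed

lemma rf_inst: "rf c j (inst t A) = inst (rt c j t) (rf c (Suc j) A)"
proof -
  let ?\<iota> = "\<lambda>n. case n of 0 \<Rightarrow> t | Suc m \<Rightarrow> Var m"
  have "rf c j (inst t A) = fsub (\<lambda>n. rt c j (?\<iota> n)) (rf c (Suc j) A)"
    unfolding inst_def by (rule rf_fsub) simp
  moreover have "(\<lambda>n. rt c j (?\<iota> n)) = (\<lambda>n. case n of 0 \<Rightarrow> rt c j t | Suc m \<Rightarrow> Var m)"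
    by (rule ext) (simp split: nat.splits)
  ultimately show ?thesis by (simp add: inst_def)
qed

lemma nd_rf: "nd G A \<Longrightarrow> nd (map (rf c j) G) (rf c j A)"
proof (induction G A arbitrary: j rule: nd.induct)
  case (Assm A G) then show ?case by (auto intro: nd.Assm)
next
  case (ConjI G A B) then show ?case by (auto intro: nd.ConjI)
next
  case (ConjE1 G A B) then show ?case by (metis rf.simps(4) nd.ConjE1)
next
  case (ConjE2 G A B) then show ?case by (metis rf.simps(4) nd.ConjE2)
next
  case (DisjI1 G A B) then show ?case by (metis rf.simps(5) nd.DisjI1)
next
  case (DisjI2 G B A) then show ?case by (metis rf.simps(5) nd.DisjI2)
next
  case (DisjE G A B C)
  show ?case using DisjE(4)[of j] DisjE(5)[of j] DisjE(6)[of j] by (auto intro: nd.DisjE)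
next
  case (NegI A G B)
  show ?case using NegI(3)[of j] NegI(4)[of j] by (auto intro: nd.NegI)
next
  case (Class A G B)
  show ?case using Class(3)[of j] Class(4)[of j] by (auto intro: nd.Class)
next
  case (AllI G A)
  have e: "map (rf c (Suc j)) (map lift G) = map lift (map (rf c j) G)"
    by (induction G) (simp_all add: rf_lift)
  have "nd (map lift (map (rf c j) G)) (rf c (Suc j) A)"
    using AllI(2)[of "Suc j"] by (simp only: e)
  then show ?case by (simp add: nd.AllI)
next
  case (AllE G A t)
  have "nd (map (rf c j) G) (All (rf c (Suc j) A))" using AllE(2)[of j] by simp
  then show ?case by (simp add: rf_inst nd.AllE)
next
  case (ExI G t A)
  have "nd (map (rf c j) G) (inst (rt c j t) (rf c (Suc j) A))" using ExI(2)[of j] by (simp add: rf_inst)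
  then show ?case by (simp add: nd.ExI)
next
  case (ExE G A B)
  have e: "map (rf c (Suc j)) (map lift G) = map lift (map (rf c j) G)"
    by (induction G) (simp_all add: rf_lift)
  have "nd (rf c (Suc j) A # map (rf c (Suc j)) (map lift G)) (rf c (Suc j) (lift B))" using ExE(4)[of "Suc j"] by simp
  then have "nd (rf c (Suc j) A # map lift (map (rf c j) G)) (lift (rf c j B))" by (simp only: e rf_lift)
  moreover have "nd (map (rf c j) G) (Ex (rf c (Suc j) A))" using ExE(3)[of j] by simp
  ultimately show ?case by (meson nd.ExE)
next
  case (Refl G t) then show ?case by (simp add: nd.Refl)
next
  case (Subst G t u A)
  have "nd (map (rf c j) G) (Eq (rt c j t) (rt c j u))" using Subst(3)[of j] by simp
  moreover have "nd (map (rf c j) G) (inst (rt c j t) (rf c (Suc j) A))" using Subst(4)[of j] by (simp add: rf_inst)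
  ultimately show ?case by (simp add: rf_inst nd.Subst)
qed

lemma rt_nosym: "c \<notin> syms_tm t \<Longrightarrow> rt c j t = t"
  by (induction t rule: fv_tm.induct) (auto simp: map_idI)

lemma rf_nosym: "c \<notin> syms_fm A \<Longrightarrow> rf c j A = A"
  by (induction A arbitrary: j rule: fsize.induct) (auto simp: map_idI rt_nosym)

lemma henkin_elim:
  assumes d: "nd (Imp (Ex A) (inst (App c []) A) # G) B"
    and cA: "c \<notin> syms_fm A" and cG: "\<forall>C\<in>set G. c \<notin> syms_fm C \<and> fv_fm C = {}"
    and cB: "c \<notin> syms_fm B" and fB: "fv_fm B = {}" and fA: "fv_fm (Ex A) = {}"
  shows "nd G B"
proof -
  have mG: "map (rf c 0) G = G" using cG by (induction G) (auto simp: rf_nosym)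
  have fA0: "fv_fm A \<subseteq> {0}" using fA by auto (metis not0_implies_Suc)
  have "rf c 0 (Imp (Ex A) (inst (App c []) A)) = Imp (Ex A) (inst (Var 0) A)"
    by (simp add: Imp_def rf_inst rf_nosym cA)
  then have d1: "nd (Imp (Ex A) A # G) B"
    using nd_rf[OF d, of c 0] mG by (simp add: rf_nosym cB inst_Var0_small[OF fA0])
  have mG2: "map lift G = G" using cG by (induction G) (auto simp: lift_closed)
  have c1: "nd (A # G) B"
  proof (rule nd_cut[of _ "Imp (Ex A) A"])
    show "nd (A # G) (Imp (Ex A) A)" unfolding Imp_def by (rule nd.DisjI2) (rule nd.Assm, simp)
    show "nd (Imp (Ex A) A # A # G) B" by (rule nd_weaken[OF d1]) auto
  qed
  have c2: "nd (Neg (Ex A) # G) B"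
  proof (rule nd_cut[of _ "Imp (Ex A) A"])
    show "nd (Neg (Ex A) # G) (Imp (Ex A) A)" unfolding Imp_def by (rule nd.DisjI1) (rule nd.Assm, simp)
    show "nd (Imp (Ex A) A # Neg (Ex A) # G) B" by (rule nd_weaken[OF d1]) auto
  qed
  have "nd (Ex A # G) B"
  proof (rule nd.ExE[of _ A])
    show "nd (Ex A # G) (Ex A)" by (rule nd.Assm) simp
    have "lift (Ex A) = Ex A" using fA by (simp add: lift_closed)
    then show "nd (A # map lift (Ex A # G)) (lift B)"
      using c1 mG2 fB by (simp add: lift_closed) (rule nd_weaken, auto)
  qed
  then show ?thesis using c2 by (rule nd_case)
qed

section \<open>Semantics\<close>

fun evt :: "(('f,'p) fs \<Rightarrow> 'a list \<Rightarrow> 'a) \<Rightarrow> (nat \<Rightarrow> 'a) \<Rightarrow> ('f,'p) tm \<Rightarrow> 'a" where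
  "evt fI e (Var n) = e n"
| "evt fI e (App f ts) = fI f (map (evt fI e) ts)"

fun holds :: "'a set \<Rightarrow> (('f,'p) fs \<Rightarrow> 'a list \<Rightarrow> 'a) \<Rightarrow> ('p \<Rightarrow> 'a list \<Rightarrow> bool) \<Rightarrow> (nat \<Rightarrow> 'a) \<Rightarrow> ('f,'p) fm \<Rightarrow> bool" where
  "holds D fI pI e (Pr p ts) = pI p (map (evt fI e) ts)"
| "holds D fI pI e (Eq s t) = (evt fI e s = evt fI e t)"
| "holds D fI pI e (Neg A) = (\<not> holds D fI pI e A)"
| "holds D fI pI e (Conj A B) = (holds D fI pI e A \<and> holds D fI pI e B)"
| "holds D fI pI e (Disj A B) = (holds D fI pI e A \<or> holds D fI pI e B)"
| "holds D fI pI e (All A) = (\<forall>d\<in>D. holds D fI pI (case_nat d e) A)"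
| "holds D fI pI e (Ex A) = (\<exists>d\<in>D. holds D fI pI (case_nat d e) A)"

definition is_int :: "'a set \<Rightarrow> (('f,'p) fs \<Rightarrow> 'a list \<Rightarrow> 'a) \<Rightarrow> bool" where
  "is_int D fI \<longleftrightarrow> D \<noteq> {} \<and> (\<forall>f ds. set ds \<subseteq> D \<longrightarrow> fI f ds \<in> D)"

lemma holds_Imp[simp]: "holds D fI pI e (Imp A B) = (holds D fI pI e A \<longrightarrow> holds D fI pI e B)"
  by (simp add: Imp_def)

lemma evt_tsub: "evt fI e (tsub \<sigma> t) = evt fI (\<lambda>n. evt fI e (\<sigma> n)) t"
proof (induction t rule: fv_tm.induct)
  case (2 f ts)
  have "map (\<lambda>x. evt fI e (tsub \<sigma> x)) ts = map (evt fI (\<lambda>n. evt fI e (\<sigma> n))) ts"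
    by (rule map_cong[OF refl]) (rule 2)
  then show ?case by (simp add: comp_def del: map_eq_conv)
qed simp

lemma evt_up: "(\<lambda>n. evt fI (case_nat d e) (up \<sigma> n)) = case_nat d (\<lambda>n. evt fI e (\<sigma> n))"
proof
  fix n show "evt fI (case_nat d e) (up \<sigma> n) = case_nat d (\<lambda>n. evt fI e (\<sigma> n)) n"
    by (cases n) (simp_all add: evt_tsub)
qed

lemma holds_fsub: "holds D fI pI e (fsub \<sigma> A) = holds D fI pI (\<lambda>n. evt fI e (\<sigma> n)) A"
proof (induction A arbitrary: e \<sigma> rule: fsize.induct)
  case (6 A) then show ?case by (simp add: evt_up)
next
  case (7 A) then show ?case by (simp add: evt_up)
qed (simp_all add: evt_tsub comp_def)

lemma holds_inst: "holds D fI pI e (inst t A) = holds D fI pI (case_nat (evt fI e t) e) A"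
proof -
  have "(\<lambda>n. evt fI e (case n of 0 \<Rightarrow> t | Suc m \<Rightarrow> Var m)) = case_nat (evt fI e t) e"
    by (rule ext) (simp split: nat.splits)
  then show ?thesis by (simp add: inst_def holds_fsub)
qed

lemma holds_lift: "holds D fI pI e (lift A) = holds D fI pI (\<lambda>n. e (Suc n)) A"
  by (simp add: lift_def holds_fsub)

lemma evt_cong: "(\<And>n. n \<in> fv_tm t \<Longrightarrow> e n = e' n) \<Longrightarrow> evt fI e t = evt fI e' t"
proof (induction t rule: fv_tm.induct)
  case (2 f ts)
  have "map (evt fI e) ts = map (evt fI e') ts"
    by (rule map_cong[OF refl]) (rule 2(1), simp, use 2(2) in auto)
  then show ?case by (simp del: map_eq_conv)
qed simp

lemma holds_cong: "(\<And>n. n \<in> fv_fm A \<Longrightarrow> e n = e' n) \<Longrightarrow> holds D fI pI e A = holds D fI pI e' A"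
proof (induction A arbitrary: e e' rule: fsize.induct)
  case (1 p ts)
  have "map (evt fI e) ts = map (evt fI e') ts"
    by (rule map_cong[OF refl], rule evt_cong) (use 1 in auto)
  then show ?case by (simp del: map_eq_conv)
next
  case (2 t u)
  have "evt fI e t = evt fI e' t" by (rule evt_cong) (use 2 in auto)
  moreover have "evt fI e u = evt fI e' u" by (rule evt_cong) (use 2 in auto)
  ultimately show ?case by simp
next
  case (3 A)
  have "holds D fI pI e A = holds D fI pI e' A" by (rule 3(1)) (use 3(2) in auto)
  then show ?case by simp
next
  case (4 A B)
  have "holds D fI pI e A = holds D fI pI e' A" by (rule 4(1)) (use 4(3) in auto)
  moreover have "holds D fI pI e B = holds D fI pI e' B" by (rule 4(2)) (use 4(3) in auto)
  ultimately show ?case by simp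
next
  case (5 A B)
  have "holds D fI pI e A = holds D fI pI e' A" by (rule 5(1)) (use 5(3) in auto)
  moreover have "holds D fI pI e B = holds D fI pI e' B" by (rule 5(2)) (use 5(3) in auto)
  ultimately show ?case by simp
next
  case (6 A)
  have "holds D fI pI (case_nat d e) A = holds D fI pI (case_nat d e') A" for d
    by (rule 6(1)) (use 6(2) in \<open>auto split: nat.splits\<close>)
  then show ?case by simp
next
  case (7 A)
  have "holds D fI pI (case_nat d e) A = holds D fI pI (case_nat d e') A" for d
    by (rule 7(1)) (use 7(2) in \<open>auto split: nat.splits\<close>)
  then show ?case by simp
qed

lemma range_case_nat: "d \<in> D \<Longrightarrow> range e \<subseteq> D \<Longrightarrow> range (case_nat d e) \<subseteq> D"
  by (auto simp: image_subset_iff split: nat.splits)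

lemma evt_in: "is_int D fI \<Longrightarrow> range e \<subseteq> D \<Longrightarrow> evt fI e t \<in> D"
proof (induction t rule: fv_tm.induct)
  case (2 f ts)
  have "set (map (evt fI e) ts) \<subseteq> D" using 2 by auto
  then show ?case using 2(2) by (simp add: is_int_def)
qed auto

lemma soundness:
  "nd G A \<Longrightarrow> is_int D fI \<Longrightarrow> range e \<subseteq> D \<Longrightarrow> (\<forall>B\<in>set G. holds D fI pI e B) \<Longrightarrow> holds D fI pI e A"
proof (induction G A arbitrary: e rule: nd.induct)
  case (AllI G A)
  show ?case
  proof (simp, intro ballI)
    fix d assume d: "d \<in> D"
    show "holds D fI pI (case_nat d e) A"
      by (rule AllI(2)) (use AllI(3,4,5) d in \<open>auto simp: holds_lift range_case_nat\<close>)
  qed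
next
  case (AllE G A t)
  then show ?case by (auto simp: holds_inst evt_in)
next
  case (ExI G t A)
  then show ?case by (auto simp: holds_inst evt_in intro!: bexI[of _ "evt fI e t"])
next
  case (ExE G A B)
  obtain d where d: "d \<in> D" "holds D fI pI (case_nat d e) A" using ExE(3)[OF ExE(5) ExE(6) ExE(7)] by auto
  have "holds D fI pI (case_nat d e) (lift B)"
    by (rule ExE(4)) (use ExE(5,6,7) d in \<open>auto simp: holds_lift range_case_nat\<close>)
  then show ?case by (simp add: holds_lift)
next
  case (Subst G t u A)
  then show ?case by (auto simp: holds_inst)
qed auto

lemma holds_Alls:
  "holds D fI pI e ((All ^^ k) B) \<longleftrightarrow> (\<forall>e'. range e' \<subseteq> D \<longrightarrow> (\<forall>n. e' (n + k) = e n) \<longrightarrow> holds D fI pI e' B)"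
  if "range e \<subseteq> D"
  using that
proof (induction k arbitrary: e)
  case 0
  show ?case
  proof
    assume "holds D fI pI e ((All ^^ 0) B)"
    then show "\<forall>e'. range e' \<subseteq> D \<longrightarrow> (\<forall>n. e' (n + 0) = e n) \<longrightarrow> holds D fI pI e' B"
      by (metis add_0_right ext funpow_0)
  next
    assume "\<forall>e'. range e' \<subseteq> D \<longrightarrow> (\<forall>n. e' (n + 0) = e n) \<longrightarrow> holds D fI pI e' B"
    then show "holds D fI pI e ((All ^^ 0) B)" using 0 by simp
  qed
next
  case (Suc k)
  show ?case
  proof
    assume h: "holds D fI pI e ((All ^^ Suc k) B)"
    show "\<forall>e'. range e' \<subseteq> D \<longrightarrow> (\<forall>n. e' (n + Suc k) = e n) \<longrightarrow> holds D fI pI e' B"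
    proof (intro allI impI)
      fix e' :: "nat \<Rightarrow> 'a" assume r: "range e' \<subseteq> D" and a: "\<forall>n. e' (n + Suc k) = e n"
      have d: "e' k \<in> D" using r by auto
      have "holds D fI pI (case_nat (e' k) e) ((All ^^ k) B)" using h d by simp
      moreover have "\<forall>n. e' (n + k) = case_nat (e' k) e n"
        using a by (auto split: nat.splits)
      ultimately show "holds D fI pI e' B"
        using Suc(1)[of "case_nat (e' k) e"] range_case_nat[OF d Suc(2)] r by blast
    qed
  next
    assume h: "\<forall>e'. range e' \<subseteq> D \<longrightarrow> (\<forall>n. e' (n + Suc k) = e n) \<longrightarrow> holds D fI pI e' B"
    show "holds D fI pI e ((All ^^ Suc k) B)"
    proof (simp, intro ballI)
      fix d assume d: "d \<in> D"
      have "\<forall>e'. range e' \<subseteq> D \<longrightarrow> (\<forall>n. e' (n + k) = case_nat d e n) \<longrightarrow> holds D fI pI e' B"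
      proof (intro allI impI)
        fix e' :: "nat \<Rightarrow> 'a" assume r: "range e' \<subseteq> D" and a: "\<forall>n. e' (n + k) = case_nat d e n"
        have "\<forall>n. e' (n + Suc k) = e n" using a by (metis add_Suc_shift old.nat.simps(5))
        then show "holds D fI pI e' B" using h r by blast
      qed
      then show "holds D fI pI (case_nat d e) ((All ^^ k) B)"
        using Suc(1)[of "case_nat d e"] range_case_nat[OF d Suc(2)] by blast
    qed
  qed
qed

definition rk :: "nat set \<Rightarrow> nat \<Rightarrow> nat" where
  "rk Z n = card {m \<in> Z. m < n}"

lemma rk_lt: "finite Z \<Longrightarrow> n \<in> Z \<Longrightarrow> rk Z n < card Z"
  unfolding rk_def by (rule psubset_card_mono) auto

lemma rk_mono: "finite Z \<Longrightarrow> m \<in> Z \<Longrightarrow> m < n \<Longrightarrow> rk Z m < rk Z n"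
  unfolding rk_def by (rule psubset_card_mono) auto

lemma rk_inj: "finite Z \<Longrightarrow> inj_on (rk Z) Z"
proof (rule inj_onI)
  fix m n assume f: "finite Z" and mn: "m \<in> Z" "n \<in> Z" "rk Z m = rk Z n"
  show "m = n"
  proof (rule linorder_cases[of m n])
    assume "m < n" then show ?thesis using rk_mono[OF f mn(1) \<open>m < n\<close>] mn(3) by simp
  next
    assume "n < m" then show ?thesis using rk_mono[OF f mn(2) \<open>n < m\<close>] mn(3) by simp
  qed
qed

definition IB :: "'a set \<Rightarrow> (('f,'p) fs \<Rightarrow> 'a list \<Rightarrow> 'a) \<Rightarrow> ('p \<Rightarrow> 'a list \<Rightarrow> bool) \<Rightarrow> 'f \<Rightarrow> 'f \<Rightarrow> ('f,'p) fm \<Rightarrow> ('a \<Rightarrow> nat \<Rightarrow> 'a) \<Rightarrow> bool" where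
  "IB D fI pI z s \<phi> h \<longleftrightarrow>
     (holds D fI pI (h (fI (Sym z 0) [])) \<phi> \<and> (\<forall>d\<in>D. holds D fI pI (h d) \<phi> \<longrightarrow> holds D fI pI (h (fI (Sym s 1) [d])) \<phi>)
      \<longrightarrow> (\<forall>d\<in>D. holds D fI pI (h d) \<phi>))"

lemma IB_cong: "(\<And>d. holds D fI pI (h d) \<phi> = holds D fI pI (h' d) \<phi>) \<Longrightarrow> IB D fI pI z s \<phi> h = IB D fI pI z s \<phi> h'"
  unfolding IB_def by presburger

lemma ind_ax_unfold:
  "ind_ax z s x \<phi> =
    (All ^^ card (fv_fm \<phi> - {x}))
      (Imp (Conj (fsub (\<lambda>n. case n of 0 \<Rightarrow> App (Sym z 0) [] | Suc m \<Rightarrow> Var m)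
                    (fsub (\<lambda>n. if n = x then Var 0 else Var (Suc (rk (fv_fm \<phi> - {x}) n))) \<phi>))
                 (All (Imp (fsub (\<lambda>n. if n = x then Var 0 else Var (Suc (rk (fv_fm \<phi> - {x}) n))) \<phi>)
                           (fsub (\<lambda>n. case n of 0 \<Rightarrow> App (Sym s 1) [Var 0] | Suc m \<Rightarrow> Var (Suc m))
                              (fsub (\<lambda>n. if n = x then Var 0 else Var (Suc (rk (fv_fm \<phi> - {x}) n))) \<phi>)))))
           (All (fsub (\<lambda>n. if n = x then Var 0 else Var (Suc (rk (fv_fm \<phi> - {x}) n))) \<phi>)))"
  unfolding ind_ax_def Let_def rk_def ..

lemma holds_ind_ax:
  fixes \<phi> :: "('f,'p) fm" and z s :: 'f and fI :: "('f,'p) fs \<Rightarrow> 'a list \<Rightarrow> 'a"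
  assumes I: "is_int D fI" and r: "range e \<subseteq> D"
  shows "holds D fI pI e (ind_ax z s x \<phi>) \<longleftrightarrow> (\<forall>e'. range e' \<subseteq> D \<longrightarrow> IB D fI pI z s \<phi> (\<lambda>d. e'(x := d)))"
proof -
  define Z where "Z = fv_fm \<phi> - {x}"
  define k where "k = card Z"
  define \<rho> :: "nat \<Rightarrow> ('f,'p) tm" where "\<rho> = (\<lambda>n. if n = x then Var 0 else Var (Suc (rk Z n)))"
  define \<beta> :: "nat \<Rightarrow> ('f,'p) tm" where "\<beta> = (\<lambda>n. case n of 0 \<Rightarrow> App (Sym z 0) [] | Suc m \<Rightarrow> Var m)"
  define \<gamma> :: "nat \<Rightarrow> ('f,'p) tm" where "\<gamma> = (\<lambda>n. case n of 0 \<Rightarrow> App (Sym s 1) [Var 0] | Suc m \<Rightarrow> Var (Suc m))"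
  define \<psi> where "\<psi> = fsub \<rho> \<phi>"
  define g :: "(nat \<Rightarrow> 'a) \<Rightarrow> 'a \<Rightarrow> nat \<Rightarrow> 'a" where "g = (\<lambda>e'' d n. if n = x then d else e'' (rk Z n))"
  have unf: "ind_ax z s x \<phi> = (All ^^ k) (Imp (Conj (fsub \<beta> \<psi>) (All (Imp \<psi> (fsub \<gamma> \<psi>)))) (All \<psi>))"
    unfolding ind_ax_unfold Z_def k_def \<rho>_def \<beta>_def \<gamma>_def \<psi>_def ..
  have fZ: "finite Z" unfolding Z_def by simp
  have body: "holds D fI pI e'' (Imp (Conj (fsub \<beta> \<psi>) (All (Imp \<psi> (fsub \<gamma> \<psi>)))) (All \<psi>)) \<longleftrightarrow> IB D fI pI z s \<phi> (g e'')" for e''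
  proof -
    have h1: "holds D fI pI (case_nat d e'') \<psi> = holds D fI pI (g e'' d) \<phi>" for d
    proof -
      have "(\<lambda>n. evt fI (case_nat d e'') (\<rho> n)) = g e'' d"
        by (rule ext) (simp add: \<rho>_def g_def)
      then show ?thesis by (simp add: \<psi>_def holds_fsub)
    qed
    have h2: "holds D fI pI e'' (fsub \<beta> \<psi>) = holds D fI pI (g e'' (fI (Sym z 0) [])) \<phi>"
    proof -
      have "(\<lambda>n. evt fI e'' (\<beta> n)) = case_nat (fI (Sym z 0) []) e''"
        by (rule ext) (simp add: \<beta>_def split: nat.splits)
      then show ?thesis using h1 by (simp add: holds_fsub)
    qed
    have h3: "holds D fI pI (case_nat d e'') (fsub \<gamma> \<psi>) = holds D fI pI (g e'' (fI (Sym s 1) [d])) \<phi>" for d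
    proof -
      have "(\<lambda>n. evt fI (case_nat d e'') (\<gamma> n)) = case_nat (fI (Sym s 1) [d]) e''"
        by (rule ext) (simp add: \<gamma>_def split: nat.splits)
      then show ?thesis using h1 by (simp add: holds_fsub)
    qed
    show ?thesis by (simp add: IB_def h1 h2 h3)
  qed
  have "holds D fI pI e (ind_ax z s x \<phi>) \<longleftrightarrow> (\<forall>e''. range e'' \<subseteq> D \<longrightarrow> (\<forall>n. e'' (n + k) = e n) \<longrightarrow> IB D fI pI z s \<phi> (g e''))"
    unfolding unf holds_Alls[OF r] body ..
  also have "\<dots> \<longleftrightarrow> (\<forall>e'. range e' \<subseteq> D \<longrightarrow> IB D fI pI z s \<phi> (\<lambda>d. e'(x := d)))"
  proof
    assume h: "\<forall>e''. range e'' \<subseteq> D \<longrightarrow> (\<forall>n. e'' (n + k) = e n) \<longrightarrow> IB D fI pI z s \<phi> (g e'')"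
    show "\<forall>e'. range e' \<subseteq> D \<longrightarrow> IB D fI pI z s \<phi> (\<lambda>d. e'(x := d))"
    proof (intro allI impI)
      fix e' :: "nat \<Rightarrow> 'a" assume r': "range e' \<subseteq> D"
      define e'' where "e'' = (\<lambda>i. if i < k then e' (the_inv_into Z (rk Z) i) else e (i - k))"
      have r'': "range e'' \<subseteq> D" using r r' unfolding e''_def image_subset_iff by simp
      have sh: "\<forall>n. e'' (n + k) = e n" by (simp add: e''_def)
      have IBg: "IB D fI pI z s \<phi> (g e'')" using h r'' sh by blast
      have eq: "holds D fI pI (g e'' d) \<phi> = holds D fI pI (e'(x := d)) \<phi>" for d
      proof (rule holds_cong)
        fix n assume n: "n \<in> fv_fm \<phi>"
        show "g e'' d n = (e'(x := d)) n"
        proof (cases "n = x")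
          case False
          then have nZ: "n \<in> Z" using n by (simp add: Z_def)
          have "rk Z n < k" using rk_lt[OF fZ nZ] by (simp add: k_def)
          moreover have "the_inv_into Z (rk Z) (rk Z n) = n" by (rule the_inv_into_f_f[OF rk_inj[OF fZ] nZ])
          ultimately show ?thesis using False by (simp add: g_def e''_def)
        qed (simp add: g_def)
      qed
      show "IB D fI pI z s \<phi> (\<lambda>d. e'(x := d))" using IBg IB_cong[where h="g e''" and h'="\<lambda>d. e'(x := d)", OF eq] by simp
    qed
  next
    assume h: "\<forall>e'. range e' \<subseteq> D \<longrightarrow> IB D fI pI z s \<phi> (\<lambda>d. e'(x := d))"
    show "\<forall>e''. range e'' \<subseteq> D \<longrightarrow> (\<forall>n. e'' (n + k) = e n) \<longrightarrow> IB D fI pI z s \<phi> (g e'')"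
    proof (intro allI impI)
      fix e'' :: "nat \<Rightarrow> 'a" assume r'': "range e'' \<subseteq> D"
      define e' where "e' = (\<lambda>n. e'' (rk Z n))"
      have "range e' \<subseteq> D" using r'' by (auto simp: e'_def)
      moreover have "(\<lambda>d. e'(x := d)) = g e''" by (auto simp: g_def e'_def fun_eq_iff)
      ultimately show "IB D fI pI z s \<phi> (g e'')" using h by force
    qed
  qed
  finally show ?thesis .
qed

lemma fv_ind_ax:
  fixes \<phi> :: "('f,'p) fm" and z s :: 'f
  shows "fv_fm (ind_ax z s x \<phi>) = {}"
proof -
  define Z where "Z = fv_fm \<phi> - {x}"
  define k where "k = card Z"
  define \<rho> :: "nat \<Rightarrow> ('f,'p) tm" where "\<rho> = (\<lambda>n. if n = x then Var 0 else Var (Suc (rk Z n)))"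
  define \<beta> :: "nat \<Rightarrow> ('f,'p) tm" where "\<beta> = (\<lambda>n. case n of 0 \<Rightarrow> App (Sym z 0) [] | Suc m \<Rightarrow> Var m)"
  define \<gamma> :: "nat \<Rightarrow> ('f,'p) tm" where "\<gamma> = (\<lambda>n. case n of 0 \<Rightarrow> App (Sym s 1) [Var 0] | Suc m \<Rightarrow> Var (Suc m))"
  define \<psi> where "\<psi> = fsub \<rho> \<phi>"
  have unf: "ind_ax z s x \<phi> = (All ^^ k) (Imp (Conj (fsub \<beta> \<psi>) (All (Imp \<psi> (fsub \<gamma> \<psi>)))) (All \<psi>))"
    unfolding ind_ax_unfold Z_def k_def \<rho>_def \<beta>_def \<gamma>_def \<psi>_def ..
  have fZ: "finite Z" unfolding Z_def by simp
  have fpsi: "fv_fm \<psi> \<subseteq> {..k}"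
  proof
    fix m assume "m \<in> fv_fm \<psi>"
    then obtain n where n: "n \<in> fv_fm \<phi>" "m \<in> fv_tm (\<rho> n)" by (auto simp: \<psi>_def fv_fsub)
    show "m \<in> {..k}"
    proof (cases "n = x")
      case False
      then have "n \<in> Z" using n by (simp add: Z_def)
      then have "rk Z n < k" using rk_lt[OF fZ] by (simp add: k_def)
      then show ?thesis using n False by (auto simp: \<rho>_def)
    qed (use n in \<open>simp add: \<rho>_def\<close>)
  qed
  have f1: "fv_fm (fsub \<beta> \<psi>) \<subseteq> {..<k}"
  proof
    fix m assume "m \<in> fv_fm (fsub \<beta> \<psi>)"
    then obtain n where n: "n \<in> fv_fm \<psi>" "m \<in> fv_tm (\<beta> n)" unfolding fv_fsub by blast
    show "m \<in> {..<k}" using n fpsi by (cases n) (auto simp: \<beta>_def)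
  qed
  have f2: "fv_fm (fsub \<gamma> \<psi>) \<subseteq> {..k}"
  proof
    fix m assume "m \<in> fv_fm (fsub \<gamma> \<psi>)"
    then obtain n where n: "n \<in> fv_fm \<psi>" "m \<in> fv_tm (\<gamma> n)" unfolding fv_fsub by blast
    show "m \<in> {..k}" using n fpsi by (cases n) (auto simp: \<gamma>_def)
  qed
  have f3: "{m. Suc m \<in> fv_fm \<psi>} \<subseteq> {..<k}" using fpsi by auto
  have f4: "{m. Suc m \<in> fv_fm (fsub \<gamma> \<psi>)} \<subseteq> {..<k}" using f2 by auto
  have "fv_fm (Imp (Conj (fsub \<beta> \<psi>) (All (Imp \<psi> (fsub \<gamma> \<psi>)))) (All \<psi>)) \<subseteq> {..<k}"
    unfolding Imp_def using f1 f3 f4 by simp blast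
  then show ?thesis unfolding unf fv_Alls by auto
qed

lemma wf_ind_ax:
  fixes \<phi> :: "('f,'p) fm" and z s :: 'f
  assumes w: "wf_fm X P \<phi>" and zs: "Sym z 0 \<in> X" "Sym s 1 \<in> X"
  shows "wf_fm X P (ind_ax z s x \<phi>)"
proof -
  define Z where "Z = fv_fm \<phi> - {x}"
  define k where "k = card Z"
  define \<rho> :: "nat \<Rightarrow> ('f,'p) tm" where "\<rho> = (\<lambda>n. if n = x then Var 0 else Var (Suc (rk Z n)))"
  define \<beta> :: "nat \<Rightarrow> ('f,'p) tm" where "\<beta> = (\<lambda>n. case n of 0 \<Rightarrow> App (Sym z 0) [] | Suc m \<Rightarrow> Var m)"
  define \<gamma> :: "nat \<Rightarrow> ('f,'p) tm" where "\<gamma> = (\<lambda>n. case n of 0 \<Rightarrow> App (Sym s 1) [Var 0] | Suc m \<Rightarrow> Var (Suc m))"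
  define \<psi> where "\<psi> = fsub \<rho> \<phi>"
  have unf: "ind_ax z s x \<phi> = (All ^^ k) (Imp (Conj (fsub \<beta> \<psi>) (All (Imp \<psi> (fsub \<gamma> \<psi>)))) (All \<psi>))"
    unfolding ind_ax_unfold Z_def k_def \<rho>_def \<beta>_def \<gamma>_def \<psi>_def ..
  have w\<rho>: "wf_tm X (\<rho> n)" for n by (simp add: \<rho>_def)
  have w\<beta>: "wf_tm X (\<beta> n)" for n using zs by (cases n) (simp_all add: \<beta>_def)
  have w\<gamma>: "wf_tm X (\<gamma> n)" for n using zs by (cases n) (simp_all add: \<gamma>_def)
  have w\<psi>: "wf_fm X P \<psi>" unfolding \<psi>_def by (rule wf_fsub[OF w w\<rho>])
  have "wf_fm X P (fsub \<beta> \<psi>)" by (rule wf_fsub[OF w\<psi> w\<beta>])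
  moreover have "wf_fm X P (fsub \<gamma> \<psi>)" by (rule wf_fsub[OF w\<psi> w\<gamma>])
  ultimately show ?thesis unfolding unf wf_Alls Imp_def using w\<psi> by simp
qed

section \<open>Canonical Skolem expansion\<close>

definition envf :: "nat list \<Rightarrow> 'a list \<Rightarrow> 'a \<Rightarrow> nat \<Rightarrow> 'a" where
  "envf xs ds d n = (case n of 0 \<Rightarrow> d | Suc m \<Rightarrow> (case map_of (zip xs ds) m of None \<Rightarrow> d | Some v \<Rightarrow> v))"

lemma size_in_list: "x \<in> set ts \<Longrightarrow> size x \<le> size_list size ts"
  by (rule size_list_estimation') auto

context
  fixes D :: "'a set" and fI :: "('f,'p) fs \<Rightarrow> 'a list \<Rightarrow> 'a" and pI :: "'p \<Rightarrow> 'a list \<Rightarrow> bool"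
    and F :: "('f,'p) fs set"
begin

function ev_t :: "(nat \<Rightarrow> 'a) \<Rightarrow> ('f,'p) tm \<Rightarrow> 'a" and ev_f :: "(nat \<Rightarrow> 'a) \<Rightarrow> ('f,'p) fm \<Rightarrow> bool" where
  "ev_t e (Var n) = e n"
| "ev_t e (App f ts) = (case f of
      Sk q A \<Rightarrow> (if Sk q A \<in> F then fI f (map (ev_t e) ts) else
         (if \<exists>d\<in>D. ev_f (envf (sorted_list_of_set (fv_fm (qf q A))) (map (ev_t e) ts) d) A = (q = QEx)
          then SOME d. d \<in> D \<and> ev_f (envf (sorted_list_of_set (fv_fm (qf q A))) (map (ev_t e) ts) d) A = (q = QEx)
          else SOME d. d \<in> D))
    | Sym g k \<Rightarrow> fI f (map (ev_t e) ts))"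
| "ev_f e (Pr p ts) = pI p (map (ev_t e) ts)"
| "ev_f e (Eq s t) = (ev_t e s = ev_t e t)"
| "ev_f e (Neg A) = (\<not> ev_f e A)"
| "ev_f e (Conj A B) = (ev_f e A \<and> ev_f e B)"
| "ev_f e (Disj A B) = (ev_f e A \<or> ev_f e B)"
| "ev_f e (All A) = (\<forall>d\<in>D. ev_f (case_nat d e) A)"
| "ev_f e (Ex A) = (\<exists>d\<in>D. ev_f (case_nat d e) A)"
  by pat_completeness auto
termination
  by (relation "measure (\<lambda>x. case x of Inl (e, t) \<Rightarrow> size t | Inr (e, A) \<Rightarrow> size A)")
     (auto dest!: size_in_list)

end


definition fIs :: "'a set \<Rightarrow> (('f,'p) fs \<Rightarrow> 'a list \<Rightarrow> 'a) \<Rightarrow> ('p \<Rightarrow> 'a list \<Rightarrow> bool) \<Rightarrow> ('f,'p) fs set \<Rightarrow> ('f,'p) fs \<Rightarrow> 'a list \<Rightarrow> 'a" where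
  "fIs D fI pI F f ds = (case f of
      Sk q A \<Rightarrow> (if Sk q A \<in> F then fI f ds else
         (if \<exists>d\<in>D. ev_f D fI pI F (envf (sorted_list_of_set (fv_fm (qf q A))) ds d) A = (q = QEx)
          then SOME d. d \<in> D \<and> ev_f D fI pI F (envf (sorted_list_of_set (fv_fm (qf q A))) ds d) A = (q = QEx)
          else SOME d. d \<in> D))
    | Sym g k \<Rightarrow> fI f ds)"

lemma ev_eq:
  assumes ne: "D \<noteq> {}"
  shows "ev_t D fI pI F e t = evt (fIs D fI pI F) e t"
    and "ev_f D fI pI F e A = holds D (fIs D fI pI F) pI e A"
proof (induction e t and e A rule: ev_t_ev_f.induct[where D=D and fI=fI and pI=pI and F=F])
  case (2 e f ts)
  have IH: "ev_t D fI pI F e t = evt (fIs D fI pI F) e t" if t: "t \<in> set ts" for t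
  proof (cases f)
    case (Sym g k) then show ?thesis using 2(1) t by blast
  next
    case (Sk q A) show ?thesis
    proof (cases "Sk q A \<in> F")
      case True then show ?thesis using 2(2) Sk t by blast
    next
      case False then show ?thesis using 2(3) Sk t ne by blast
    qed
  qed
  have m: "map (ev_t D fI pI F e) ts = map (evt (fIs D fI pI F) e) ts"
    by (rule map_cong[OF refl]) (rule IH)
  show ?case unfolding ev_t.simps evt.simps m by (simp add: fIs_def split: fs.splits)
next
  case (3 e p ts)
  have m: "map (ev_t D fI pI F e) ts = map (evt (fIs D fI pI F) e) ts"
    by (rule map_cong[OF refl]) (rule 3)
  show ?case unfolding ev_f.simps holds.simps m ..
qed simp_all

lemma fIs_Sk:
  "D \<noteq> {} \<Longrightarrow> Sk q A \<notin> F \<Longrightarrow> fIs D fI pI F (Sk q A) ds =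
    (if \<exists>d\<in>D. holds D (fIs D fI pI F) pI (envf (sorted_list_of_set (fv_fm (qf q A))) ds d) A = (q = QEx)
     then SOME d. d \<in> D \<and> holds D (fIs D fI pI F) pI (envf (sorted_list_of_set (fv_fm (qf q A))) ds d) A = (q = QEx)
     else SOME d. d \<in> D)"
  by (simp add: fIs_def ev_eq)

lemma fIs_F: "f \<in> F \<Longrightarrow> fIs D fI pI F f = fI f"
  by (rule ext) (cases f; simp add: fIs_def)

lemma is_int_fIs: "is_int D fI \<Longrightarrow> is_int D (fIs D fI pI F)"
proof -
  assume I: "is_int D fI"
  then have ne: "\<exists>d. d \<in> D" by (auto simp: is_int_def)
  have "fIs D fI pI F f ds \<in> D" if "set ds \<subseteq> D" for f ds
  proof (cases f)
    case (Sym g k) then show ?thesis using I that by (simp add: fIs_def is_int_def)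
  next
    case (Sk q A)
    show ?thesis
    proof (cases "Sk q A \<in> F")
      case True then show ?thesis using I that Sk by (simp add: fIs_def is_int_def)
    next
      case False
      let ?P = "\<lambda>d. ev_f D fI pI F (envf (sorted_list_of_set (fv_fm (qf q A))) ds d) A = (q = QEx)"
      show ?thesis
      proof (cases "\<exists>d\<in>D. ?P d")
        case True
        then have "\<exists>d. d \<in> D \<and> ?P d" by blast
        then have "(SOME d. d \<in> D \<and> ?P d) \<in> D" by (rule someI2_ex) blast
        then show ?thesis using True False Sk by (simp add: fIs_def)
      next
        case c: False
        have "(SOME d. d \<in> D) \<in> D" using ne by (rule someI2_ex) blast
        then show ?thesis using c False Sk by (simp add: fIs_def)
      qed
    qed
  qed
  then show ?thesis using I by (simp add: is_int_def)
qed

lemma evt_agree: "wf_tm F t \<Longrightarrow> evt (fIs D fI pI F) e t = evt fI e t"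
proof (induction t rule: fv_tm.induct)
  case (2 f ts)
  have m: "map (evt (fIs D fI pI F) e) ts = map (evt fI e) ts"
    by (rule map_cong[OF refl]) (use 2 in auto)
  show ?case using 2(2) by (simp only: evt.simps m fIs_F wf_tm.simps)
qed simp

lemma holds_agree: "wf_fm F P A \<Longrightarrow> holds D (fIs D fI pI F) pI e A = holds D fI pI e A"
proof (induction A arbitrary: e rule: fsize.induct)
  case (1 p ts)
  have m: "map (evt (fIs D fI pI F) e) ts = map (evt fI e) ts"
    by (rule map_cong[OF refl]) (use 1 in \<open>auto intro: evt_agree\<close>)
  show ?case by (simp only: holds.simps m)
qed (simp_all add: evt_agree)

lemma stage_mono_Suc: "skolem_stage F P i \<subseteq> skolem_stage F P (Suc i)"
proof (induction i)
  case (Suc i)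
  show ?case
  proof
    fix f assume "f \<in> skolem_stage F P (Suc i)"
    then obtain q A where "f = Sk q A" "wf_fm (F \<union> skolem_stage F P i) P (qf q A)" by auto
    moreover have "F \<union> skolem_stage F P i \<subseteq> F \<union> skolem_stage F P (Suc i)" using Suc by auto
    ultimately show "f \<in> skolem_stage F P (Suc (Suc i))" using wf_fm_mono by fastforce
  qed
qed simp

lemma stage_mono: "i \<le> j \<Longrightarrow> skolem_stage F P i \<subseteq> skolem_stage F P j"
  using lift_Suc_mono_le[of "skolem_stage F P", OF stage_mono_Suc] by blast

lemma finite_stage: "finite S \<Longrightarrow> S \<subseteq> F \<union> skolems F P \<Longrightarrow> \<exists>N. S \<subseteq> F \<union> skolem_stage F P N"
proof (induction S rule: finite_induct)
  case (insert x S)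
  then obtain N where N: "S \<subseteq> F \<union> skolem_stage F P N" by auto
  show ?case
  proof (cases "x \<in> F")
    case True then show ?thesis using N by auto
  next
    case False
    then obtain M where M: "x \<in> skolem_stage F P M" using insert(4) by (auto simp: skolems_def)
    have "skolem_stage F P N \<subseteq> skolem_stage F P (max N M)" by (rule stage_mono) simp
    moreover have "skolem_stage F P M \<subseteq> skolem_stage F P (max N M)" by (rule stage_mono) simp
    ultimately show ?thesis using N M by blast
  qed
qed simp

lemma Sk_in_skolems: "wf_fm (F \<union> skolems F P) P (qf q A) \<Longrightarrow> Sk q A \<in> skolems F P"
proof -
  assume w: "wf_fm (F \<union> skolems F P) P (qf q A)"
  obtain N where N: "syms_fm (qf q A) \<subseteq> F \<union> skolem_stage F P N"
    using finite_stage[OF finite_syms_fm wf_fm_syms[OF w]] by blast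
  have "wf_fm (F \<union> skolem_stage F P N) P (qf q A)" by (rule wf_fm_mono_syms[OF w N])
  then have "Sk q A \<in> skolem_stage F P (Suc N)" by (simp only: skolem_stage.simps) blast
  then show ?thesis unfolding skolems_def by blast
qed

lemma wf_skterm: "Sk q A \<in> X \<Longrightarrow> wf_tm X (skterm q A)"
  by (simp add: skterm_def)

lemma qf_simps[simp]: "qf QAll A = All A" "qf QEx A = Ex A" by simp_all

lemma map_of_zip_map: "m \<in> set xs \<Longrightarrow> map_of (zip xs (map e xs)) m = Some (e m)"
  by (induction xs) auto

lemma envf_agree:
  assumes "m \<in> fv_fm A"
  shows "envf (sorted_list_of_set (fv_fm (qf q A))) (map e (sorted_list_of_set (fv_fm (qf q A)))) d m = case_nat d e m"
proof (cases m)
  case (Suc k)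
  have fin: "finite (fv_fm (qf q A))" by (rule finite_fv_fm)
  have "k \<in> fv_fm (qf q A)" using assms Suc by (cases q) auto
  then have "k \<in> set (sorted_list_of_set (fv_fm (qf q A)))" using fin by simp
  then show ?thesis using Suc by (simp add: envf_def map_of_zip_map)
qed (simp add: envf_def)

lemma witness_step:
  fixes fI :: "('f,'p) fs \<Rightarrow> 'a list \<Rightarrow> 'a"
  assumes ne: "D \<noteq> {}" and nf: "Sk q B \<notin> F"
  shows "holds D (fIs D fI pI F) pI (case_nat (evt (fIs D fI pI F) e (skterm q B)) e) B \<longleftrightarrow>
         (if q = QEx then \<exists>d\<in>D. holds D (fIs D fI pI F) pI (case_nat d e) B
          else \<forall>d\<in>D. holds D (fIs D fI pI F) pI (case_nat d e) B)"
proof -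
  let ?J = "fIs D fI pI F"
  let ?xs = "sorted_list_of_set (fv_fm (qf q B))"
  let ?H = "\<lambda>d. holds D ?J pI (case_nat d e) B"
  have fe: "holds D ?J pI (envf ?xs (map e ?xs) d) B = ?H d" for d
    by (rule holds_cong) (rule envf_agree)
  have ev: "evt ?J e (skterm q B) = ?J (Sk q B) (map e ?xs)"
    by (simp add: skterm_def comp_def)
  also have "\<dots> = (if \<exists>d\<in>D. ?H d = (q = QEx) then SOME d. d \<in> D \<and> ?H d = (q = QEx) else SOME d. d \<in> D)"
    using fIs_Sk[OF ne nf, of fI pI "map e ?xs"] fe by simp
  finally have w: "evt ?J e (skterm q B) = (if \<exists>d\<in>D. ?H d = (q = QEx) then SOME d. d \<in> D \<and> ?H d = (q = QEx) else SOME d. d \<in> D)" .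
  show ?thesis
  proof (cases "\<exists>d\<in>D. ?H d = (q = QEx)")
    case True
    then have "\<exists>d. d \<in> D \<and> ?H d = (q = QEx)" by blast
    then have "?H (SOME d. d \<in> D \<and> ?H d = (q = QEx)) = (q = QEx)" by (rule someI2_ex) blast
    then show ?thesis using True w by (cases q) auto
  next
    case False
    have "(SOME d. d \<in> D) \<in> D" using ne by (simp add: some_in_eq)
    then show ?thesis using False w by (cases q) auto
  qed
qed

lemma sk_props:
  fixes fI :: "('f,'p) fs \<Rightarrow> 'a list \<Rightarrow> 'a"
  assumes sf: "skolem_free F P" and ne: "D \<noteq> {}"
  shows "wf_fm (F \<union> skolems F P) P A \<Longrightarrow> range e \<subseteq> D \<Longrightarrow>
    wf_fm (F \<union> skolems F P) P (sk q A) \<and>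
    holds D (fIs D fI pI F) pI e (sk q A) = holds D (fIs D fI pI F) pI e A"
proof (induction "fsize A" arbitrary: A q e rule: less_induct)
  case less
  let ?K = "F \<union> skolems F P"
  let ?J = "fIs D fI pI F"
  have quant: "wf_fm ?K P (sk q (inst (skterm q B) B)) \<and>
      holds D ?J pI e (sk q (inst (skterm q B) B)) =
      (if q = QEx then \<exists>d\<in>D. holds D ?J pI (case_nat d e) B else \<forall>d\<in>D. holds D ?J pI (case_nat d e) B)"
    if AB: "A = qf q B" for B
  proof -
    have wB: "wf_fm ?K P B" using less(2) AB by (cases q) auto
    have sk: "Sk q B \<in> skolems F P" using Sk_in_skolems less(2) AB by blast
    then have nf: "Sk q B \<notin> F" using sf by (auto simp: skolem_free_def)
    have wt: "wf_tm ?K (skterm q B)" using sk by (intro wf_skterm) auto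
    have wi: "wf_fm ?K P (inst (skterm q B) B)" by (rule wf_inst[OF wB wt])
    have lt: "fsize (inst (skterm q B) B) < fsize A" using AB by (cases q) auto
    have IH: "wf_fm ?K P (sk q (inst (skterm q B) B)) \<and>
        holds D ?J pI e (sk q (inst (skterm q B) B)) = holds D ?J pI e (inst (skterm q B) B)"
      by (rule less(1)[OF lt wi less(3)])
    then show ?thesis using witness_step[OF ne nf, of fI pI e] by (simp add: holds_inst)
  qed
  show ?case
  proof (cases A)
    case (Neg B)
    have "fsize B < fsize A" using Neg by simp
    then show ?thesis using less(1)[where A=B and q="dualq q" and e=e] less(2,3) Neg by simp
  next
    case (Conj B C)
    have "fsize B < fsize A" "fsize C < fsize A" using Conj by simp_all
    then show ?thesis using less(1)[where A=B and q=q and e=e] less(1)[where A=C and q=q and e=e] less(2,3) Conj by simp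
  next
    case (Disj B C)
    have "fsize B < fsize A" "fsize C < fsize A" using Disj by simp_all
    then show ?thesis using less(1)[where A=B and q=q and e=e] less(1)[where A=C and q=q and e=e] less(2,3) Disj by simp
  next
    case (All B)
    show ?thesis
    proof (cases q)
      case QAll
      then show ?thesis using quant[of B] All less(2) by simp
    next
      case QEx
      have lt: "fsize B < fsize A" using All by simp
      have wB: "wf_fm ?K P B" using less(2) All by simp
      have "wf_fm ?K P (sk q B) \<and> holds D ?J pI (case_nat d e) (sk q B) = holds D ?J pI (case_nat d e) B"
        if d: "d \<in> D" for d
        by (rule less(1)[OF lt wB range_case_nat[OF d less(3)]])
      then show ?thesis using All QEx ne by auto
    qed
  next
    case (Ex B)
    show ?thesis
    proof (cases q)
      case QEx
      then show ?thesis using quant[of B] Ex less(2) by simp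
    next
      case QAll
      have lt: "fsize B < fsize A" using Ex by simp
      have wB: "wf_fm ?K P B" using less(2) Ex by simp
      have "wf_fm ?K P (sk q B) \<and> holds D ?J pI (case_nat d e) (sk q B) = holds D ?J pI (case_nat d e) B"
        if d: "d \<in> D" for d
        by (rule less(1)[OF lt wB range_case_nat[OF d less(3)]])
      then show ?thesis using Ex QAll ne by auto
    qed
  qed (use less(2) in simp_all)
qed

section \<open>Henkin axioms\<close>

definition henkin :: "('f,'p) fm \<Rightarrow> ('f,'p) fm" where
  "henkin A = Imp (Ex A) (inst (App (Sk QEx A) []) A)"

definition HKs :: "('f,'p) fs set \<Rightarrow> ('p \<times> nat) set \<Rightarrow> ('f,'p) fm set" where
  "HKs K P = {henkin A | A. wf_fm K P (Ex A) \<and> fv_fm (Ex A) = {}}"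

definition incons :: "('f,'p) fm set \<Rightarrow> bool" where
  "incons C \<longleftrightarrow> (\<exists>G A. set G \<subseteq> C \<and> nd G A \<and> nd G (Neg A))"

lemma henkin_inj: "inj henkin"
  by (rule injI) (simp add: henkin_def Imp_def)

lemma syms_henkin: "syms_fm (henkin A) \<subseteq> insert (Sk QEx A) (syms_fm A)"
  using syms_inst[of "App (Sk QEx A) []" A] by (auto simp: henkin_def Imp_def)

lemma fv_henkin: "fv_fm (Ex A) = {} \<Longrightarrow> fv_fm (henkin A) = {}"
proof -
  assume a: "fv_fm (Ex A) = {}"
  then have "fv_fm A \<subseteq> {0}" by auto (metis not0_implies_Suc)
  then have "fv_fm (inst (App (Sk QEx A) []) A) = {}" by (intro fv_inst_closed) auto
  then show ?thesis using a by (simp add: henkin_def Imp_def)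
qed

lemma HKs_D: "h \<in> HKs K P \<Longrightarrow> \<exists>A. h = henkin A \<and> wf_fm K P (Ex A) \<and> fv_fm (Ex A) = {}"
  by (auto simp: HKs_def)

lemma henkin_in_HKs: "henkin A \<in> HKs K P \<Longrightarrow> wf_fm K P (Ex A) \<and> fv_fm (Ex A) = {}"
proof -
  assume "henkin A \<in> HKs K P"
  then obtain A' where A': "henkin A = henkin A'" "wf_fm K P (Ex A')" "fv_fm (Ex A') = {}"
    by (auto simp: HKs_def)
  have "A = A'" by (rule injD[OF henkin_inj A'(1)])
  then show ?thesis using A' by simp
qed

lemma Sk_not_in_own: "Sk q A \<notin> syms_fm A"
proof
  assume "Sk q A \<in> syms_fm A"
  then have "size (Sk q A) < size A" by (rule size_syms_fm)
  then show False by simp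
qed

lemma elim_HK:
  assumes sf: "skolem_free F P"
    and S': "\<forall>C\<in>S'. syms_fm C \<subseteq> F \<and> fv_fm C = {}"
    and \<psi>: "syms_fm \<psi> \<subseteq> F" "fv_fm \<psi> = {}"
  shows "card (set G - S') = n \<Longrightarrow> set G \<subseteq> S' \<union> HKs (F \<union> skolems F P) P \<Longrightarrow> nd G \<psi> \<Longrightarrow>
    \<exists>G'. set G' \<subseteq> S' \<and> nd G' \<psi>"
proof (induction n arbitrary: G rule: less_induct)
  case (less n)
  let ?K = "F \<union> skolems F P"
  let ?Hs = "set G - S'"
  show ?case
  proof (cases "?Hs = {}")
    case True
    then show ?thesis using less(4) by blast
  next
    case False
    have finHs: "finite ?Hs" by simp
    have HsK: "?Hs \<subseteq> HKs ?K P" using less(3) by blast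
    let ?As = "henkin -` ?Hs"
    have finAs: "finite ?As" using finite_vimageI[OF finHs henkin_inj] .
    obtain h where h: "h \<in> ?Hs" using False by blast
    then obtain A0 where "h = henkin A0" using HsK HKs_D by blast
    then have neAs: "?As \<noteq> {}" using h by blast
    define M where "M = Max (size ` ?As)"
    have "M \<in> size ` ?As" unfolding M_def using finAs neAs by (intro Max_in) auto
    then obtain A where A: "A \<in> ?As" "size A = M" by blast
    have maxA: "size A' \<le> size A" if "A' \<in> ?As" for A'
      using A(2) finAs that unfolding M_def by (auto intro: Max_ge)
    have hA: "henkin A \<in> ?Hs" using A(1) by simp
    have wfA: "wf_fm ?K P (Ex A)" and fvA: "fv_fm (Ex A) = {}"
      using henkin_in_HKs[of A ?K P] hA HsK by blast+
    let ?c = "Sk QEx A"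
    have cSk: "?c \<in> skolems F P" using Sk_in_skolems[of F P QEx A] wfA by simp
    then have cF: "?c \<notin> F" using sf by (auto simp: skolem_free_def)
    define G1 where "G1 = filter (\<lambda>x. x \<noteq> henkin A) G"
    have d: "nd (henkin A # G1) \<psi>" by (rule nd_weaken[OF less(4)]) (auto simp: G1_def)
    have G1: "\<forall>C\<in>set G1. ?c \<notin> syms_fm C \<and> fv_fm C = {}"
    proof
      fix C assume C: "C \<in> set G1"
      then have CG: "C \<in> set G" "C \<noteq> henkin A" by (auto simp: G1_def)
      show "?c \<notin> syms_fm C \<and> fv_fm C = {}"
      proof (cases "C \<in> S'")
        case True then show ?thesis using S' cF by blast
      next
        case False
        then have CH: "C \<in> ?Hs" using CG by blast
        then obtain A' where A': "C = henkin A'" "wf_fm ?K P (Ex A')" "fv_fm (Ex A')= {}"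
          using HsK HKs_D by blast
        have "A' \<in> ?As" using CH A' by simp
        then have sz: "size A' \<le> size A" by (rule maxA)
        have ne: "A' \<noteq> A" using A' CG by blast
        have "?c \<notin> syms_fm A'"
        proof
          assume "?c \<in> syms_fm A'"
          then have "size ?c < size A'" by (rule size_syms_fm)
          then show False using sz by simp
        qed
        moreover have "?c \<noteq> Sk QEx A'" using ne by simp
        ultimately have "?c \<notin> syms_fm C" using syms_henkin[of A'] A'(1) by blast
        moreover have "fv_fm C = {}" using fv_henkin[OF A'(3)] A'(1) by simp
        ultimately show ?thesis by simp
      qed
    qed
    have ndG1: "nd G1 \<psi>"
    proof (rule henkin_elim)
      show "nd (Imp (Ex A) (inst (App ?c []) A) # G1) \<psi>" using d by (simp add: henkin_def)
      show "?c \<notin> syms_fm A" by (rule Sk_not_in_own)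
      show "\<forall>C\<in>set G1. ?c \<notin> syms_fm C \<and> fv_fm C = {}" by (rule G1)
      show "?c \<notin> syms_fm \<psi>" using \<psi> cF by blast
      show "fv_fm \<psi> = {}" by (rule \<psi>(2))
      show "fv_fm (Ex A) = {}" by (rule fvA)
    qed
    have "set G1 - S' = ?Hs - {henkin A}" by (auto simp: G1_def)
    moreover have "n > 0" using less(2) hA finHs by (metis card_gt_0_iff empty_iff)
    ultimately have "card (set G1 - S') < n" using less(2) hA finHs by (simp add: card_Diff1_less)
    moreover have "set G1 \<subseteq> S' \<union> HKs ?K P" using less(3) by (auto simp: G1_def)
    ultimately show ?thesis using less(1) ndG1 by blast
  qed
qed

definition CF :: "('f,'p) fs set \<Rightarrow> ('p \<times> nat) set \<Rightarrow> ('f,'p) fm set" where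
  "CF K P = {A. wf_fm K P A \<and> fv_fm A = {}}"

definition CT :: "('f,'p) fs set \<Rightarrow> ('f,'p) tm set" where
  "CT K = {t. wf_tm K t \<and> fv_tm t = {}}"

lemma incons_insert: "incons (insert A H) \<Longrightarrow> \<exists>G. set G \<subseteq> H \<and> (\<forall>B. nd (A # G) B)"
proof -
  assume "incons (insert A H)"
  then obtain G X where G: "set G \<subseteq> insert A H" "nd G X" "nd G (Neg X)" by (auto simp: incons_def)
  define G' where "G' = filter (\<lambda>x. x \<noteq> A) G"
  have s: "set G \<subseteq> set (A # G')" by (auto simp: G'_def)
  have "nd (A # G') B" for B by (rule nd_explode[OF nd_weaken[OF G(2) s] nd_weaken[OF G(3) s]])
  moreover have "set G' \<subseteq> H" using G(1) by (auto simp: G'_def)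
  ultimately show ?thesis by blast
qed

lemma lindenbaum:
  assumes c0: "\<not> incons B0" and B0: "B0 \<subseteq> C0"
  shows "\<exists>H. B0 \<subseteq> H \<and> H \<subseteq> C0 \<and> \<not> incons H \<and> (\<forall>A\<in>C0. A \<notin> H \<longrightarrow> incons (insert A H))"
proof -
  let ?A = "{C. B0 \<subseteq> C \<and> C \<subseteq> C0 \<and> \<not> incons C}"
  have "\<exists>M\<in>?A. \<forall>X\<in>?A. M \<subseteq> X \<longrightarrow> X = M"
  proof (rule subset_Zorn_nonempty)
    show "?A \<noteq> {}" using c0 B0 by blast
  next
    fix \<C> assume ne: "\<C> \<noteq> {}" and ch: "subset.chain ?A \<C>"
    have sub: "\<C> \<subseteq> ?A" using ch by (auto simp: subset.chain_def)
    have "B0 \<subseteq> \<Union>\<C>" using ne sub by blast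
    moreover have "\<Union>\<C> \<subseteq> C0" using sub by blast
    moreover have "\<not> incons (\<Union>\<C>)"
    proof
      assume "incons (\<Union>\<C>)"
      then obtain G X where G: "set G \<subseteq> \<Union>\<C>" "nd G X" "nd G (Neg X)" by (auto simp: incons_def)
      obtain C where C: "C \<in> \<C>" "set G \<subseteq> C"
        using finite_subset_Union_chain[OF finite_set G(1) ne ch] by blast
      then have "incons C" using G by (auto simp: incons_def)
      then show False using C sub by blast
    qed
    ultimately show "\<Union>\<C> \<in> ?A" by blast
  qed
  then obtain M where M: "M \<in> ?A" "\<forall>X\<in>?A. M \<subseteq> X \<longrightarrow> X = M" by blast
  have "\<forall>A\<in>C0. A \<notin> M \<longrightarrow> incons (insert A M)"
  proof (intro ballI impI)
    fix A assume A: "A \<in> C0" "A \<notin> M"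
    show "incons (insert A M)"
    proof (rule ccontr)
      assume "\<not> incons (insert A M)"
      then have "insert A M \<in> ?A" using M(1) A(1) by blast
      then have "insert A M = M" using M(2) by blast
      then show False using A(2) by blast
    qed
  qed
  then show ?thesis using M(1) by blast
qed

locale mcs =
  fixes K :: "('f,'p) fs set" and P :: "('p \<times> nat) set" and H :: "('f,'p) fm set"
  assumes cons: "\<not> incons H" and sub: "H \<subseteq> CF K P"
    and max: "\<forall>A\<in>CF K P. A \<notin> H \<longrightarrow> incons (insert A H)"
    and hk: "HKs K P \<subseteq> H"
    and skK: "\<And>A. wf_fm K P (Ex A) \<Longrightarrow> Sk QEx A \<in> K"
begin

lemma closed: "set G \<subseteq> H \<Longrightarrow> nd G A \<Longrightarrow> A \<in> CF K P \<Longrightarrow> A \<in> H"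
proof (rule ccontr)
  assume G: "set G \<subseteq> H" "nd G A" "A \<in> CF K P" "A \<notin> H"
  then have "incons (insert A H)" using max by blast
  then obtain G2 where G2: "set G2 \<subseteq> H" "\<forall>B. nd (A # G2) B" using incons_insert by blast
  obtain X :: "('f,'p) fm" where True by simp
  have a: "nd (G @ G2) A" by (rule nd_weaken[OF G(2)]) auto
  have "nd (A # G @ G2) X" by (rule nd_weaken[OF G2(2)[rule_format, of X]]) auto
  then have x1: "nd (G @ G2) X" by (rule nd_cut[OF a])
  have "nd (A # G @ G2) (Neg X)" by (rule nd_weaken[OF G2(2)[rule_format, of "Neg X"]]) auto
  then have x2: "nd (G @ G2) (Neg X)" by (rule nd_cut[OF a])
  have "set (G @ G2) \<subseteq> H" using G(1) G2(1) by simp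
  then show False using cons x1 x2 by (auto simp: incons_def)
qed

lemma not_both: "A \<in> H \<Longrightarrow> Neg A \<in> H \<Longrightarrow> False"
proof -
  assume "A \<in> H" "Neg A \<in> H"
  then have "set [A, Neg A] \<subseteq> H" "nd [A, Neg A] A" "nd [A, Neg A] (Neg A)" by (auto intro: nd.Assm)
  then show False using cons by (auto simp: incons_def)
qed

lemma compl: "A \<in> CF K P \<Longrightarrow> A \<in> H \<or> Neg A \<in> H"
proof (rule ccontr)
  assume A: "A \<in> CF K P" "\<not> (A \<in> H \<or> Neg A \<in> H)"
  have nA: "Neg A \<in> CF K P" using A(1) by (simp add: CF_def)
  obtain G1 where G1: "set G1 \<subseteq> H" "\<forall>B. nd (A # G1) B" using incons_insert max A by blast
  obtain G2 where G2: "set G2 \<subseteq> H" "\<forall>B. nd (Neg A # G2) B" using incons_insert max A nA by blast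
  obtain X :: "('f,'p) fm" where True by simp
  have "nd (Neg A # G1 @ G2) A" by (rule nd_weaken[OF G2(2)[rule_format, of A]]) auto
  moreover have "nd (Neg A # G1 @ G2) (Neg A)" by (rule nd.Assm) simp
  ultimately have a: "nd (G1 @ G2) A" by (rule nd.Class)
  have "nd (A # G1 @ G2) X" by (rule nd_weaken[OF G1(2)[rule_format, of X]]) auto
  then have x1: "nd (G1 @ G2) X" by (rule nd_cut[OF a])
  have "nd (A # G1 @ G2) (Neg X)" by (rule nd_weaken[OF G1(2)[rule_format, of "Neg X"]]) auto
  then have x2: "nd (G1 @ G2) (Neg X)" by (rule nd_cut[OF a])
  have "set (G1 @ G2) \<subseteq> H" using G1(1) G2(1) by simp
  then show False using cons x1 x2 by (auto simp: incons_def)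
qed

lemma Neg_iff: "A \<in> CF K P \<Longrightarrow> Neg A \<in> H \<longleftrightarrow> A \<notin> H"
  using compl not_both by blast

lemma inH_CF: "A \<in> H \<Longrightarrow> A \<in> CF K P"
  using sub by blast

end

lemma nd_NegAll_ExNeg:
  assumes fA: "fv_fm A \<subseteq> {0}"
  shows "nd [Neg (All A)] (Ex (Neg A))"
proof (rule nd.Class)
  let ?G0 = "[Neg (Ex (Neg A)), Neg (All A)]"
  have c1: "fv_fm (Neg (Ex (Neg A))) = {}" "fv_fm (Neg (All A)) = {}"
    using fA by auto
  have ml: "map lift ?G0 = ?G0" using c1 by (simp add: lift_closed)
  have "nd (Neg A # ?G0) (Ex (Neg A))"
  proof (rule nd.ExI[of _ "Var 0"])
    have "inst (Var 0) (Neg A) = Neg A" using inst_Var0_small[of "Neg A"] fA by simp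
    then show "nd (Neg A # ?G0) (inst (Var 0) (Neg A))" by (simp add: nd.Assm)
  qed
  moreover have "nd (Neg A # ?G0) (Neg (Ex (Neg A)))" by (rule nd.Assm) simp
  ultimately have "nd ?G0 A" by (rule nd.Class)
  then have "nd (map lift ?G0) A" using ml by simp
  then have "nd ?G0 (All A)" by (rule nd.AllI)
  then show "nd (Neg (Ex (Neg A)) # [Neg (All A)]) (All A)" by simp
  show "nd (Neg (Ex (Neg A)) # [Neg (All A)]) (Neg (All A))" by (rule nd.Assm) simp
qed

lemma map_tsub_closed: "set xs \<subseteq> CT K \<Longrightarrow> map (tsub \<sigma>) xs = xs"
  by (induction xs) (auto simp: CT_def closed_tsub)

lemma fv_Ex_0: "fv_fm (Ex A) = {} \<Longrightarrow> fv_fm A \<subseteq> {0}"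
  by auto (metis not0_implies_Suc)

lemma fv_All_0: "fv_fm (All A) = {} \<Longrightarrow> fv_fm A \<subseteq> {0}"
  by auto (metis not0_implies_Suc)

locale tmodel = mcs K P H for K :: "('f,'p) fs set" and P :: "('p \<times> nat) set" and H +
  fixes c0 :: "('f,'p) tm"
  assumes c0: "c0 \<in> CT K"
begin

lemma eq_refl: "t \<in> CT K \<Longrightarrow> Eq t t \<in> H"
  by (rule closed[of "[]"]) (auto simp: nd.Refl CF_def CT_def)

lemma subst_H:
  assumes "t \<in> CT K" "u \<in> CT K" "Eq t u \<in> H" "inst t A \<in> H" "inst u A \<in> CF K P"
  shows "inst u A \<in> H"
proof (rule closed[of "[Eq t u, inst t A]"])
  show "set [Eq t u, inst t A] \<subseteq> H" using assms by simp
  show "nd [Eq t u, inst t A] (inst u A)" by (rule nd.Subst) (auto intro: nd.Assm)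
qed (rule assms(5))

lemma eq_sym: "t \<in> CT K \<Longrightarrow> u \<in> CT K \<Longrightarrow> Eq t u \<in> H \<Longrightarrow> Eq u t \<in> H"
proof -
  assume a: "t \<in> CT K" "u \<in> CT K" "Eq t u \<in> H"
  have i1: "inst t (Eq (Var 0) t) = Eq t t" and i2: "inst u (Eq (Var 0) t) = Eq u t"
    using a by (simp_all add: inst_def closed_tsub CT_def)
  have "inst u (Eq (Var 0) t) \<in> H"
    by (rule subst_H[OF a]) (use a i1 i2 eq_refl in \<open>auto simp: CF_def CT_def\<close>)
  then show ?thesis using i2 by simp
qed

lemma eq_trans: "t \<in> CT K \<Longrightarrow> u \<in> CT K \<Longrightarrow> v \<in> CT K \<Longrightarrow> Eq t u \<in> H \<Longrightarrow> Eq u v \<in> H \<Longrightarrow> Eq t v \<in> H"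
proof -
  assume a: "t \<in> CT K" "u \<in> CT K" "v \<in> CT K" "Eq t u \<in> H" "Eq u v \<in> H"
  have i1: "inst u (Eq t (Var 0)) = Eq t u" and i2: "inst v (Eq t (Var 0)) = Eq t v"
    using a by (simp_all add: inst_def closed_tsub CT_def)
  have "inst v (Eq t (Var 0)) \<in> H"
    by (rule subst_H[OF a(2,3,5)]) (use a i1 i2 in \<open>auto simp: CF_def CT_def\<close>)
  then show ?thesis using i2 by simp
qed

lemma list_cong:
  assumes \<Phi>: "\<And>t xs. inst t (\<Phi> xs) = \<Phi> (map (tsub (\<lambda>n. case n of 0 \<Rightarrow> t | Suc m \<Rightarrow> Var m)) xs)"
    and CF\<Phi>: "\<And>xs. set xs \<subseteq> CT K \<Longrightarrow> length xs = length ts \<Longrightarrow> \<Phi> xs \<in> CF K P"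
    and ts: "set ts \<subseteq> CT K" and us: "set us \<subseteq> CT K" and len: "length us = length ts"
    and eqs: "\<And>i. i < length ts \<Longrightarrow> Eq (ts ! i) (us ! i) \<in> H"
    and h: "\<Phi> ts \<in> H"
  shows "\<Phi> us \<in> H"
proof -
  have "i \<le> length ts \<Longrightarrow> \<Phi> (take i us @ drop i ts) \<in> H" for i
  proof (induction i)
    case 0 then show ?case using h by simp
  next
    case (Suc i)
    then have i: "i < length ts" by simp
    let ?T = "\<Phi> (take i us @ Var 0 # drop (Suc i) ts)"
    have tsi: "ts ! i \<in> CT K" using ts i by auto
    have usi: "us ! i \<in> CT K" using us i len by auto
    have tk: "set (take i us) \<subseteq> CT K" using us by (meson order_trans set_take_subset)
    have dr: "set (drop (Suc i) ts) \<subseteq> CT K" using ts by (meson order_trans set_drop_subset)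
    have m1: "map (tsub \<sigma>) (take i us) = take i us" for \<sigma> :: "nat \<Rightarrow> ('f,'p) tm" by (rule map_tsub_closed[OF tk])
    have m2: "map (tsub \<sigma>) (drop (Suc i) ts) = drop (Suc i) ts" for \<sigma> :: "nat \<Rightarrow> ('f,'p) tm" by (rule map_tsub_closed[OF dr])
    have e1: "inst (ts ! i) ?T = \<Phi> (take i us @ drop i ts)"
      unfolding \<Phi> using m1 m2 i by (simp add: Cons_nth_drop_Suc)
    have e2: "inst (us ! i) ?T = \<Phi> (take (Suc i) us @ drop (Suc i) ts)"
      unfolding \<Phi> using m1 m2 i len by (simp add: take_Suc_conv_app_nth)
    have "inst (us ! i) ?T \<in> H"
    proof (rule subst_H[OF tsi usi eqs[OF i]])
      show "inst (ts ! i) ?T \<in> H" using e1 Suc by simp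
      have "set (take (Suc i) us @ drop (Suc i) ts) \<subseteq> CT K"
        using us dr set_take_subset[of "Suc i" us] by auto
      moreover have "length (take (Suc i) us @ drop (Suc i) ts) = length ts" using i len by simp
      ultimately show "inst (us ! i) ?T \<in> CF K P" unfolding e2 by (rule CF\<Phi>)
    qed
    then show ?case using e2 by simp
  qed
  from this[of "length ts"] show ?thesis using len by simp
qed

definition cls :: "('f,'p) tm \<Rightarrow> ('f,'p) tm set" where
  "cls t = {u \<in> CT K. Eq t u \<in> H}"

definition Dm :: "('f,'p) tm set set" where
  "Dm = cls ` CT K"

definition rep :: "('f,'p) tm set \<Rightarrow> ('f,'p) tm" where
  "rep d = (SOME t. t \<in> CT K \<and> d = cls t)"

definition fIm :: "('f,'p) fs \<Rightarrow> ('f,'p) tm set list \<Rightarrow> ('f,'p) tm set" where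
  "fIm f ds = (if f \<in> K \<and> length ds = arity f \<and> set ds \<subseteq> Dm then cls (App f (map rep ds)) else cls c0)"

definition pIm :: "'p \<Rightarrow> ('f,'p) tm set list \<Rightarrow> bool" where
  "pIm p ds = (Pr p (map rep ds) \<in> H)"

lemma cls_eq: "t \<in> CT K \<Longrightarrow> u \<in> CT K \<Longrightarrow> cls t = cls u \<longleftrightarrow> Eq t u \<in> H"
proof
  assume a: "t \<in> CT K" "u \<in> CT K" "cls t = cls u"
  have "u \<in> cls u" using a eq_refl by (simp add: cls_def)
  then have "u \<in> cls t" using a(3) by simp
  then show "Eq t u \<in> H" by (simp add: cls_def)
next
  assume a: "t \<in> CT K" "u \<in> CT K" "Eq t u \<in> H"
  show "cls t = cls u"
    unfolding cls_def using a eq_trans eq_sym by blast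
qed

lemma rep: "d \<in> Dm \<Longrightarrow> rep d \<in> CT K \<and> cls (rep d) = d"
proof -
  assume "d \<in> Dm"
  then have "\<exists>t. t \<in> CT K \<and> d = cls t" by (auto simp: Dm_def)
  then have "rep d \<in> CT K \<and> d = cls (rep d)" unfolding rep_def by (rule someI_ex)
  then show ?thesis by simp
qed

lemma rep_cls: "t \<in> CT K \<Longrightarrow> rep (cls t) \<in> CT K \<and> Eq t (rep (cls t)) \<in> H"
proof -
  assume t: "t \<in> CT K"
  have "cls t \<in> Dm" using t by (simp add: Dm_def)
  then have r: "rep (cls t) \<in> CT K" "cls (rep (cls t)) = cls t" using rep by blast+
  then have "Eq (rep (cls t)) t \<in> H" using cls_eq t by blast
  then show ?thesis using eq_sym r t by blast
qed

lemma CT_App: "App f ts \<in> CT K \<longleftrightarrow> f \<in> K \<and> length ts = arity f \<and> set ts \<subseteq> CT K"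
  by (auto simp: CT_def)

lemma is_int_m: "is_int Dm fIm"
proof -
  have "Dm \<noteq> {}" using c0 by (auto simp: Dm_def)
  moreover have "fIm f ds \<in> Dm" if "set ds \<subseteq> Dm" for f ds
  proof -
    have "set (map rep ds) \<subseteq> CT K" using rep that by auto
    then show ?thesis using that c0 by (auto simp: fIm_def Dm_def CT_App)
  qed
  ultimately show ?thesis by (simp add: is_int_def)
qed

lemma evt_m: "t \<in> CT K \<Longrightarrow> evt fIm e t = cls t"
proof (induction t rule: fv_tm.induct)
  case (1 n) then show ?case by (simp add: CT_def)
next
  case (2 f ts)
  have f: "f \<in> K" "length ts = arity f" "set ts \<subseteq> CT K" using 2(2) CT_App by blast+
  have m: "map (evt fIm e) ts = map cls ts" using 2(1) f(3) by auto
  have sD: "set (map cls ts) \<subseteq> Dm" using f(3) by (auto simp: Dm_def)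
  have "evt fIm e (App f ts) = cls (App f (map rep (map cls ts)))"
    using f sD by (simp add: m fIm_def)
  also have "\<dots> = cls (App f ts)"
  proof -
    let ?us = "map rep (map cls ts)"
    have us: "set ?us \<subseteq> CT K" using rep_cls f(3) by auto
    have "Eq (App f ts) (App f ?us) \<in> H"
    proof (rule list_cong[where \<Phi>="\<lambda>xs. Eq (App f ts) (App f xs)" and ts=ts])
      show "inst t (Eq (App f ts) (App f xs)) = Eq (App f ts) (App f (map (tsub (\<lambda>n. case n of 0 \<Rightarrow> t | Suc m \<Rightarrow> Var m)) xs))" for t xs
        using 2(2) by (simp add: inst_def CT_def closed_tsub del: tsub.simps) (simp add: closed_tsub)
      show "Eq (App f ts) (App f xs) \<in> CF K P" if "set xs \<subseteq> CT K" "length xs = length ts" for xs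
        using that 2(2) f by (auto simp: CF_def CT_def)
      show "Eq (ts ! i) (?us ! i) \<in> H" if "i < length ts" for i
      proof -
        have "ts ! i \<in> CT K" using f(3) that by (meson nth_mem subsetD)
        then show ?thesis using rep_cls[of "ts ! i"] that by simp
      qed
      show "Eq (App f ts) (App f ts) \<in> H" by (rule eq_refl[OF 2(2)])
    qed (use f us in auto)
    moreover have "App f ?us \<in> CT K" using us f by (simp add: CT_App)
    ultimately show ?thesis using cls_eq 2(2) by metis
  qed
  finally show ?case .
qed

end

context tmodel
begin

lemma pr_cong: "Pr p ts \<in> CF K P \<Longrightarrow> Pr p ts \<in> H \<longleftrightarrow> Pr p (map rep (map cls ts)) \<in> H"
proof -
  assume cf: "Pr p ts \<in> CF K P"
  then have ts: "set ts \<subseteq> CT K" and pp: "(p, length ts) \<in> P" by (auto simp: CF_def CT_def)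
  let ?us = "map rep (map cls ts)"
  have us: "set ?us \<subseteq> CT K" using rep_cls ts by auto
  have nth: "ts ! i \<in> CT K" if "i < length ts" for i using ts that by (meson nth_mem subsetD)
  have \<Phi>: "inst t (Pr p xs) = Pr p (map (tsub (\<lambda>n. case n of 0 \<Rightarrow> t | Suc m \<Rightarrow> Var m)) xs)"
    for t :: "('f,'p) tm" and xs
    by (simp add: inst_def)
  have CF\<Phi>: "Pr p xs \<in> CF K P" if "set xs \<subseteq> CT K" "length xs = length ts" for xs
    using that pp by (auto simp: CF_def CT_def)
  show ?thesis
  proof
    assume h: "Pr p ts \<in> H"
    show "Pr p ?us \<in> H"
    proof (rule list_cong[where \<Phi>="Pr p", OF \<Phi> CF\<Phi> ts us])
      show "length ?us = length ts" by simp
      show "Eq (ts ! i) (?us ! i) \<in> H" if "i < length ts" for i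
        using rep_cls[of "ts ! i"] nth[of i] that by auto
    qed (use h in auto)
  next
    assume h: "Pr p ?us \<in> H"
    have CF\<Phi>': "Pr p xs \<in> CF K P" if "set xs \<subseteq> CT K" "length xs = length ?us" for xs
      using that pp by (auto simp: CF_def CT_def)
    show "Pr p ts \<in> H"
    proof (rule list_cong[where \<Phi>="Pr p", OF \<Phi> CF\<Phi>' us ts])
      show "length ts = length ?us" by simp
      show "Eq (?us ! i) (ts ! i) \<in> H" if "i < length ?us" for i
        using rep_cls[of "ts ! i"] nth[of i] that eq_sym by auto
    qed (use h in auto)
  qed
qed

lemma mp_H: "Imp A B \<in> H \<Longrightarrow> A \<in> H \<Longrightarrow> B \<in> CF K P \<Longrightarrow> B \<in> H"
proof -
  assume a: "Imp A B \<in> H" "A \<in> H" "B \<in> CF K P"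
  have "nd [Imp A B, A] B" by (rule nd_mp[of _ A B]) (rule nd.Assm, simp)+
  then show ?thesis using a by (intro closed[of "[Imp A B, A]"]) auto
qed

lemma truth: "A \<in> CF K P \<Longrightarrow> holds Dm fIm pIm e A \<longleftrightarrow> A \<in> H"
proof (induction "fsize A" arbitrary: A rule: less_induct)
  case less
  show ?case
  proof (cases A)
    case (Pr p ts)
    have ts: "set ts \<subseteq> CT K" using less(2) Pr by (auto simp: CF_def CT_def)
    have m: "map (evt fIm e) ts = map cls ts" using evt_m ts by auto
    have "holds Dm fIm pIm e A = (Pr p (map rep (map (evt fIm e) ts)) \<in> H)"
      by (simp only: Pr holds.simps pIm_def)
    then have "holds Dm fIm pIm e A = (Pr p (map rep (map cls ts)) \<in> H)" by (simp only: m)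
    then show ?thesis using pr_cong less(2) Pr by simp
  next
    case (Eq t u)
    have tu: "t \<in> CT K" "u \<in> CT K" using less(2) Eq by (auto simp: CF_def CT_def)
    then show ?thesis using Eq evt_m cls_eq by simp
  next
    case (Neg B)
    have B: "B \<in> CF K P" using less(2) Neg by (simp add: CF_def)
    have "holds Dm fIm pIm e B = (B \<in> H)" using less(1)[of B] B Neg by simp
    then show ?thesis using Neg Neg_iff[OF B] by simp
  next
    case (Conj B C)
    have B: "B \<in> CF K P" and C: "C \<in> CF K P" using less(2) Conj by (auto simp: CF_def)
    have hB: "holds Dm fIm pIm e B = (B \<in> H)" using less(1)[of B] B Conj by simp
    have hC: "holds Dm fIm pIm e C = (C \<in> H)" using less(1)[of C] C Conj by simp
    have "Conj B C \<in> H \<longleftrightarrow> B \<in> H \<and> C \<in> H"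
    proof
      assume h: "Conj B C \<in> H"
      have "nd [Conj B C] B" by (rule nd.ConjE1[of _ B C]) (rule nd.Assm, simp)
      then have "B \<in> H" by (rule closed[of "[Conj B C]", rotated]) (use h B in auto)
      have "nd [Conj B C] C" by (rule nd.ConjE2[of _ B C]) (rule nd.Assm, simp)
      then have "C \<in> H" by (rule closed[of "[Conj B C]", rotated]) (use h C in auto)
      moreover note \<open>B \<in> H\<close>
      ultimately show "B \<in> H \<and> C \<in> H" by simp
    next
      assume h: "B \<in> H \<and> C \<in> H"
      have "nd [B, C] (Conj B C)" by (rule nd.ConjI) (rule nd.Assm, simp)+
      then show "Conj B C \<in> H" by (rule closed[of "[B, C]", rotated]) (use h less(2) Conj in auto)
    qed
    then show ?thesis using Conj hB hC by simp
  next
    case (Disj B C)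
    have B: "B \<in> CF K P" and C: "C \<in> CF K P" using less(2) Disj by (auto simp: CF_def)
    have hB: "holds Dm fIm pIm e B = (B \<in> H)" using less(1)[of B] B Disj by simp
    have hC: "holds Dm fIm pIm e C = (C \<in> H)" using less(1)[of C] C Disj by simp
    have "Disj B C \<in> H \<longleftrightarrow> B \<in> H \<or> C \<in> H"
    proof
      assume h: "Disj B C \<in> H"
      show "B \<in> H \<or> C \<in> H"
      proof (rule ccontr)
        assume "\<not> (B \<in> H \<or> C \<in> H)"
        then have n: "Neg B \<in> H" "Neg C \<in> H" using compl B C by blast+
        let ?G = "[Disj B C, Neg B, Neg C]"
        have "nd ?G B"
        proof (rule nd.DisjE[of _ B C])
          show "nd ?G (Disj B C)" by (rule nd.Assm) simp
          show "nd (B # ?G) B" by (rule nd.Assm) simp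
          show "nd (C # ?G) B" by (rule nd_explode[of _ C]) (auto intro: nd.Assm)
        qed
        moreover have "nd ?G (Neg B)" by (rule nd.Assm) simp
        moreover have "set ?G \<subseteq> H" using h n by simp
        ultimately show False using cons by (auto simp: incons_def)
      qed
    next
      assume h: "B \<in> H \<or> C \<in> H"
      then show "Disj B C \<in> H"
      proof
        assume b: "B \<in> H"
        have "nd [B] (Disj B C)" by (rule nd.DisjI1) (rule nd.Assm, simp)
        then show ?thesis by (rule closed[of "[B]", rotated]) (use b less(2) Disj in auto)
      next
        assume c: "C \<in> H"
        have "nd [C] (Disj B C)" by (rule nd.DisjI2) (rule nd.Assm, simp)
        then show ?thesis by (rule closed[of "[C]", rotated]) (use c less(2) Disj in auto)
      qed
    qed
    then show ?thesis using Disj hB hC by simp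
  next
    case (All B)
    have wB: "wf_fm K P B" and fB: "fv_fm B \<subseteq> {0}" using less(2) All fv_All_0 by (auto simp: CF_def)
    have instCF: "inst t B \<in> CF K P" if "t \<in> CT K" for t
      using that wB fB fv_inst_closed[of t B] by (auto simp: CF_def CT_def intro: wf_inst)
    have IH: "holds Dm fIm pIm e (inst t B) = (inst t B \<in> H)" if "t \<in> CT K" for t
      using less(1)[of "inst t B"] instCF[OF that] All by simp
    have "holds Dm fIm pIm e A \<longleftrightarrow> (\<forall>t\<in>CT K. inst t B \<in> H)"
      using All IH evt_m by (auto simp: Dm_def holds_inst)
    also have "\<dots> \<longleftrightarrow> All B \<in> H"
    proof
      assume h: "\<forall>t\<in>CT K. inst t B \<in> H"
      show "All B \<in> H"
      proof (rule ccontr)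
        assume "All B \<notin> H"
        then have nA: "Neg (All B) \<in> H" using compl less(2) All by blast
        have exCF: "Ex (Neg B) \<in> CF K P" using wB fB by (auto simp: CF_def)
        have ex: "Ex (Neg B) \<in> H"
          by (rule closed[OF _ nd_NegAll_ExNeg[OF fB] exCF]) (use nA in simp)
        have wE: "wf_fm K P (Ex (Neg B))" and cE: "fv_fm (Ex (Neg B)) = {}" using exCF by (auto simp: CF_def)
        have "henkin (Neg B) \<in> HKs K P" unfolding HKs_def using wE cE by blast
        then have hk1: "henkin (Neg B) \<in> H" using hk by blast
        let ?c = "App (Sk QEx (Neg B)) [] :: ('f,'p) tm"
        have cCT: "?c \<in> CT K" using skK[OF wE] cE by (simp add: CT_def)
        have "inst ?c (Neg B) \<in> H"
          by (rule mp_H[of "Ex (Neg B)"]) (use hk1 ex instCF[OF cCT] in \<open>auto simp: henkin_def CF_def inst_def\<close>)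
        then have "Neg (inst ?c B) \<in> H" by (simp add: inst_def)
        moreover have "inst ?c B \<in> H" using h cCT by blast
        ultimately show False using not_both by blast
      qed
    next
      assume h: "All B \<in> H"
      show "\<forall>t\<in>CT K. inst t B \<in> H"
      proof
        fix t assume t: "t \<in> CT K"
        have "nd [All B] (inst t B)" by (rule nd.AllE) (rule nd.Assm, simp)
        then show "inst t B \<in> H" by (rule closed[of "[All B]", rotated]) (use h instCF[OF t] in auto)
      qed
    qed
    finally show ?thesis using All by simp
  next
    case (Ex B)
    have wB: "wf_fm K P B" and fB: "fv_fm B \<subseteq> {0}" using less(2) Ex fv_Ex_0 by (auto simp: CF_def)
    have instCF: "inst t B \<in> CF K P" if "t \<in> CT K" for t
      using that wB fB fv_inst_closed[of t B] by (auto simp: CF_def CT_def intro: wf_inst)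
    have IH: "holds Dm fIm pIm e (inst t B) = (inst t B \<in> H)" if "t \<in> CT K" for t
      using less(1)[of "inst t B"] instCF[OF that] Ex by simp
    have "holds Dm fIm pIm e A \<longleftrightarrow> (\<exists>t\<in>CT K. inst t B \<in> H)"
      using Ex IH evt_m by (auto simp: Dm_def holds_inst)
    also have "\<dots> \<longleftrightarrow> Ex B \<in> H"
    proof
      assume "\<exists>t\<in>CT K. inst t B \<in> H"
      then obtain t where t: "t \<in> CT K" "inst t B \<in> H" by blast
      have "nd [inst t B] (Ex B)" by (rule nd.ExI[of _ t]) (rule nd.Assm, simp)
      then show "Ex B \<in> H" by (rule closed[of "[inst t B]", rotated]) (use t less(2) Ex in auto)
    next
      assume h: "Ex B \<in> H"
      have wE: "wf_fm K P (Ex B)" and cE: "fv_fm (Ex B) = {}" using less(2) Ex by (auto simp: CF_def)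
      have "henkin B \<in> HKs K P" unfolding HKs_def using wE cE by blast
      then have hk1: "henkin B \<in> H" using hk by blast
      let ?c = "App (Sk QEx B) [] :: ('f,'p) tm"
      have cCT: "?c \<in> CT K" using skK[OF wE] cE by (simp add: CT_def)
      have "inst ?c B \<in> H"
        by (rule mp_H[of "Ex B"]) (use hk1 h instCF[OF cCT] in \<open>auto simp: henkin_def\<close>)
      then show "\<exists>t\<in>CT K. inst t B \<in> H" using cCT by blast
    qed
    finally show ?thesis using Ex by simp
  qed
qed

end

lemma completeness:
  fixes F :: "('f,'p) fs set" and P :: "('p \<times> nat) set" and S :: "('f,'p) fm set" and \<psi> :: "('f,'p) fm"
  assumes sf: "skolem_free F P" and z0: "Sym z 0 \<in> F"
    and Sw: "\<forall>A\<in>S. wf_fm F P A \<and> fv_fm A = {}"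
    and w\<psi>: "wf_fm F P \<psi>" and c\<psi>: "fv_fm \<psi> = {}"
    and np: "\<not> prov S \<psi>"
  shows "\<exists>(D :: ('f,'p) tm set set) fI pI. is_int D fI \<and> (\<forall>A\<in>S. \<forall>e. holds D fI pI e A) \<and> (\<forall>e. \<not> holds D fI pI e \<psi>)"
proof -
  let ?K = "F \<union> skolems F P"
  let ?S0 = "insert (Neg \<psi>) S"
  have S0: "\<forall>C\<in>?S0. syms_fm C \<subseteq> F \<and> fv_fm C = {}"
  proof
    fix C assume "C \<in> ?S0"
    then have "wf_fm F P C \<and> fv_fm C = {}" using Sw w\<psi> c\<psi> by auto
    then show "syms_fm C \<subseteq> F \<and> fv_fm C = {}" using wf_fm_syms by blast
  qed
  have cons0: "\<not> incons (?S0 \<union> HKs ?K P)"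
  proof
    assume "incons (?S0 \<union> HKs ?K P)"
    then obtain G X where G: "set G \<subseteq> ?S0 \<union> HKs ?K P" "nd G X" "nd G (Neg X)" by (auto simp: incons_def)
    have "nd G \<psi>" by (rule nd_explode[OF G(2,3)])
    then obtain G' where G': "set G' \<subseteq> ?S0" "nd G' \<psi>"
      using elim_HK[OF sf S0 wf_fm_syms[OF w\<psi>] c\<psi> refl G(1)] by blast
    define G'' where "G'' = filter (\<lambda>x. x \<noteq> Neg \<psi>) G'"
    have "nd (Neg \<psi> # G'') \<psi>" by (rule nd_weaken[OF G'(2)]) (auto simp: G''_def)
    moreover have "nd (Neg \<psi> # G'') (Neg \<psi>)" by (rule nd.Assm) simp
    ultimately have "nd G'' \<psi>" by (rule nd.Class)
    moreover have "set G'' \<subseteq> S" using G'(1) by (auto simp: G''_def)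
    ultimately show False using np by (auto simp: prov_def)
  qed
  have skK: "Sk QEx A \<in> ?K" if "wf_fm ?K P (Ex A)" for A
    using Sk_in_skolems[of F P QEx A] that by simp
  have sub0: "?S0 \<union> HKs ?K P \<subseteq> CF ?K P"
  proof
    fix C assume C: "C \<in> ?S0 \<union> HKs ?K P"
    show "C \<in> CF ?K P"
    proof (cases "C \<in> ?S0")
      case True
      then have "wf_fm F P C" "fv_fm C = {}" using Sw w\<psi> c\<psi> by auto
      then show ?thesis by (auto simp: CF_def intro: wf_fm_mono)
    next
      case False
      then obtain A where A: "C = henkin A" "wf_fm ?K P (Ex A)" "fv_fm (Ex A) = {}"
        using C HKs_D by blast
      have wt: "wf_tm ?K (App (Sk QEx A) [])" using skK[OF A(2)] A(3) by simp
      have wA: "wf_fm ?K P A" using A(2) by simp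
      have "wf_fm ?K P (inst (App (Sk QEx A) []) A)" by (rule wf_inst[OF wA wt])
      then have "wf_fm ?K P C" using A wA by (simp add: henkin_def Imp_def)
      moreover have "fv_fm C = {}" using fv_henkin[OF A(3)] A(1) by simp
      ultimately show ?thesis by (simp add: CF_def)
    qed
  qed
  obtain H where H: "?S0 \<union> HKs ?K P \<subseteq> H" "H \<subseteq> CF ?K P" "\<not> incons H"
      "\<forall>A\<in>CF ?K P. A \<notin> H \<longrightarrow> incons (insert A H)"
    using lindenbaum[OF cons0 sub0] by blast
  have c0: "App (Sym z 0) [] \<in> CT ?K" using z0 by (simp add: CT_def)
  interpret T: tmodel ?K P H "App (Sym z 0) []"
    by unfold_locales (use H skK c0 in auto)
  have "\<forall>A\<in>S. \<forall>e. holds T.Dm T.fIm T.pIm e A"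
  proof (intro ballI allI)
    fix A e assume "A \<in> S"
    then have "A \<in> H" using H by blast
    then show "holds T.Dm T.fIm T.pIm e A" using T.truth H(2) by blast
  qed
  moreover have "\<forall>e. \<not> holds T.Dm T.fIm T.pIm e \<psi>"
  proof
    fix e
    have "Neg \<psi> \<in> H" using H by blast
    then have "holds T.Dm T.fIm T.pIm e (Neg \<psi>)" using T.truth H(2) by blast
    then show "\<not> holds T.Dm T.fIm T.pIm e \<psi>" by simp
  qed
  ultimately show ?thesis using T.is_int_m by blast
qed

lemma IB_transfer:
  assumes "\<And>d. holds D J pI (h d) \<phi>1 = holds D fI pI (h' d) \<phi>2"
    and "J (Sym z 0) = fI (Sym z 0)" and "J (Sym s 1) = fI (Sym s 1)"
  shows "IB D J pI z s \<phi>1 h = IB D fI pI z s \<phi>2 h'"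
  using assms by (simp add: IB_def)

lemma evt_closed: "fv_tm t = {} \<Longrightarrow> evt fI e t = evt fI e' t"
  by (rule evt_cong) simp

lemma gsi_sound:
  fixes fI :: "('f,'p) fs \<Rightarrow> 'a list \<Rightarrow> 'a" and F :: "('f,'p) fs set"
  assumes sf: "skolem_free F P" and z0: "Sym z 0 \<in> F" and s1: "Sym s 1 \<in> F"
    and Tw: "\<forall>A\<in>T. wf_fm F P A" and \<Gamma>w: "\<forall>\<gamma>\<in>\<Gamma>. wf_fm F P \<gamma>"
    and I: "is_int D fI"
    and modT: "\<forall>A\<in>T. \<forall>e. range e \<subseteq> D \<longrightarrow> holds D fI pI e A"
    and modI: "\<forall>A\<in>IND z s \<Gamma>. \<forall>e. range e \<subseteq> D \<longrightarrow> holds D fI pI e A"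
  shows "\<forall>B\<in>GSI_omega F z s \<Gamma> (sk QEx ` T). wf_fm (F \<union> skolems F P) P B \<and>
           (\<forall>e. range e \<subseteq> D \<longrightarrow> holds D (fIs D fI pI F) pI e B)"
proof -
  let ?K = "F \<union> skolems F P"
  let ?J = "fIs D fI pI F"
  let ?Inv = "\<lambda>X. \<forall>B\<in>X. wf_fm ?K P B \<and> (\<forall>e. range e \<subseteq> D \<longrightarrow> holds D ?J pI e B)"
  have ne: "D \<noteq> {}" using I by (simp add: is_int_def)
  obtain d0 where d0: "d0 \<in> D" using ne by blast
  have rd0: "range (\<lambda>_::nat. d0) \<subseteq> D" using d0 by auto
  have IJ: "is_int D ?J" by (rule is_int_fIs[OF I])
  have JF: "?J f = fI f" if "f \<in> F" for f using fIs_F[OF that] .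
  have base: "?Inv (sk QEx ` T)"
  proof
    fix B assume "B \<in> sk QEx ` T"
    then obtain A where A: "A \<in> T" "B = sk QEx A" by blast
    have wA: "wf_fm ?K P A" using Tw A(1) by (auto intro: wf_fm_mono)
    show "wf_fm ?K P B \<and> (\<forall>e. range e \<subseteq> D \<longrightarrow> holds D ?J pI e B)"
    proof (intro conjI allI impI)
      show "wf_fm ?K P B" using sk_props[OF sf ne wA rd0, of QEx fI pI] A(2) by simp
      fix e :: "nat \<Rightarrow> 'a" assume r: "range e \<subseteq> D"
      have "holds D ?J pI e B = holds D ?J pI e A" using sk_props[OF sf ne wA r, of QEx fI pI] A(2) by simp
      also have "\<dots> = holds D fI pI e A" using holds_agree Tw A(1) by blast
      finally show "holds D ?J pI e B" using modT A(1) r by blast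
    qed
  qed
  have step: "?Inv (GSI F z s \<Gamma> X)" if inv: "?Inv X" for X
  proof -
    have "(\<Union>A\<in>X. syms_fm A) \<subseteq> ?K" using inv wf_fm_syms by blast
    then have langK: "lang F X \<subseteq> ?K" unfolding lang_def by blast
    have new: "wf_fm ?K P B \<and> (\<forall>e. range e \<subseteq> D \<longrightarrow> holds D ?J pI e B)"
      if B: "B \<in> sk QEx ` IND z s (minus (down \<Gamma> (lang F X)))" for B
    proof -
      obtain x \<gamma>' where B1: "B = sk QEx (ind_ax z s x \<gamma>')" "\<gamma>' \<in> down \<Gamma> (lang F X)"
        using B by (auto simp: IND_def minus_def)
      then obtain \<sigma> \<gamma> where g: "\<gamma>' = fsub \<sigma> \<gamma>" "\<gamma> \<in> \<Gamma>"
        "\<forall>n. \<sigma> n = Var n \<or> (wf_tm (lang F X) (\<sigma> n) \<and> fv_tm (\<sigma> n) = {})"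
        by (auto simp: down_def)
      have w\<gamma>: "wf_fm F P \<gamma>" using \<Gamma>w g(2) by blast
      have w\<sigma>: "wf_tm ?K (\<sigma> n)" for n
      proof -
        have "\<sigma> n = Var n \<or> (wf_tm (lang F X) (\<sigma> n) \<and> fv_tm (\<sigma> n) = {})" using g(3) by blast
        then show ?thesis using wf_tm_mono[OF _ langK] by (cases "\<sigma> n = Var n") auto
      qed
      have w\<gamma>': "wf_fm ?K P \<gamma>'" unfolding g(1) by (rule wf_fsub[OF wf_fm_mono[OF w\<gamma>] w\<sigma>]) auto
      have wI: "wf_fm ?K P (ind_ax z s x \<gamma>')" by (rule wf_ind_ax[OF w\<gamma>']) (use z0 s1 in auto)
      show ?thesis
      proof (intro conjI allI impI)
        show "wf_fm ?K P B" using sk_props[OF sf ne wI rd0, of QEx fI pI] B1(1) by simp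
        fix e :: "nat \<Rightarrow> 'a" assume r: "range e \<subseteq> D"
        have "holds D ?J pI e B = holds D ?J pI e (ind_ax z s x \<gamma>')"
          using sk_props[OF sf ne wI r, of QEx fI pI] B1(1) by simp
        also have "\<dots>"
          unfolding holds_ind_ax[OF IJ r]
        proof (intro allI impI)
          fix e' :: "nat \<Rightarrow> 'a" assume r': "range e' \<subseteq> D"
          let ?g = "\<lambda>n. evt ?J e' (\<sigma> n)"
          have rg: "range ?g \<subseteq> D" using evt_in[OF IJ r'] by auto
          have "\<forall>e'. range e' \<subseteq> D \<longrightarrow> IB D fI pI z s \<gamma> (\<lambda>d. e'(x := d))"
          proof -
            have "ind_ax z s x \<gamma> \<in> IND z s \<Gamma>" using g(2) by (auto simp: IND_def)
            then have "holds D fI pI (\<lambda>_. d0) (ind_ax z s x \<gamma>)" using modI d0 by auto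
            then show ?thesis using holds_ind_ax[OF I, of "\<lambda>_. d0"] d0 by auto
          qed
          then have IBg: "IB D fI pI z s \<gamma> (\<lambda>d. ?g(x := d))" using rg by blast
          show "IB D ?J pI z s \<gamma>' (\<lambda>d. e'(x := d))"
          proof (cases "\<sigma> x = Var x")
            case True
            have "holds D ?J pI (e'(x := d)) \<gamma>' = holds D fI pI (?g(x := d)) \<gamma>" for d
            proof -
              have "holds D ?J pI (e'(x := d)) \<gamma>' = holds D ?J pI (\<lambda>n. evt ?J (e'(x := d)) (\<sigma> n)) \<gamma>"
                by (simp add: g(1) holds_fsub)
              also have "\<dots> = holds D ?J pI (?g(x := d)) \<gamma>"
              proof (rule holds_cong)
                fix n assume "n \<in> fv_fm \<gamma>"
                show "evt ?J (e'(x := d)) (\<sigma> n) = (?g(x := d)) n"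
                proof (cases "n = x")
                  case True then show ?thesis using \<open>\<sigma> x = Var x\<close> by simp
                next
                  case False
                  have "\<sigma> n = Var n \<or> fv_tm (\<sigma> n) = {}" using g(3) by blast
                  then show ?thesis
                  proof
                    assume "\<sigma> n = Var n" then show ?thesis using False by simp
                  next
                    assume "fv_tm (\<sigma> n) = {}" then show ?thesis using False evt_closed by simp
                  qed
                qed
              qed
              also have "\<dots> = holds D fI pI (?g(x := d)) \<gamma>" by (rule holds_agree[OF w\<gamma>])
              finally show ?thesis .
            qed
            then have "IB D ?J pI z s \<gamma>' (\<lambda>d. e'(x := d)) = IB D fI pI z s \<gamma> (\<lambda>d. ?g(x := d))"
              by (intro IB_transfer) (use JF z0 s1 in auto)
            then show ?thesis using IBg by simp
          next
            case False
            then have cx: "fv_tm (\<sigma> x) = {}" using g(3) by blast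
            have nx: "x \<notin> fv_fm \<gamma>'"
            proof
              assume "x \<in> fv_fm \<gamma>'"
              then obtain n where n: "n \<in> fv_fm \<gamma>" "x \<in> fv_tm (\<sigma> n)" unfolding g(1) fv_fsub by blast
              show False
              proof (cases "n = x")
                case True then show False using n cx by simp
              next
                case False then show False using n g(3)[rule_format, of n] by auto
              qed
            qed
            have "holds D ?J pI (e'(x := d)) \<gamma>' = holds D ?J pI e' \<gamma>'" for d
              by (rule holds_cong) (use nx in auto)
            then show ?thesis by (simp add: IB_def)
          qed
        qed
        finally show "holds D ?J pI e B" .
      qed
    qed
    show ?thesis unfolding GSI_def using inv new by blast
  qed
  have "?Inv ((GSI F z s \<Gamma> ^^ i) (sk QEx ` T))" for i
  proof (induction i)
    case 0 then show ?case using base by simp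
  next
    case (Suc i) then show ?case using step by simp
  qed
  then show ?thesis unfolding GSI_omega_def by blast
qed

theorem proposition12:
  fixes F :: "('f,'p) fs set" and P :: "('p \<times> nat) set"
    and z s :: 'f and T \<Gamma> :: "('f,'p) fm set" and \<phi> :: "('f,'p) fm"
  assumes "skolem_free F P"
    and "Sym z 0 \<in> F" and "Sym s 1 \<in> F"
    and "\<forall>A\<in>T. wf_fm F P A \<and> fv_fm A = {}"
    and "\<forall>\<gamma>\<in>\<Gamma>. wf_fm F P \<gamma>"
    and "wf_fm F P \<phi>"
    and "prov (GSI_omega F z s \<Gamma> (sk QEx ` T)) \<phi>"
  shows "prov (T \<union> IND z s \<Gamma>) \<phi>"
proof (rule ccontr)
  assume np: "\<not> prov (T \<union> IND z s \<Gamma>) \<phi>"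
  let ?S = "T \<union> IND z s \<Gamma>"
  have Sw: "\<forall>A\<in>?S. wf_fm F P A \<and> fv_fm A = {}"
  proof
    fix A assume "A \<in> ?S"
    then show "wf_fm F P A \<and> fv_fm A = {}"
    proof
      assume "A \<in> T" then show ?thesis using assms(4) by blast
    next
      assume "A \<in> IND z s \<Gamma>"
      then obtain x \<gamma> where A: "A = ind_ax z s x \<gamma>" "\<gamma> \<in> \<Gamma>" by (auto simp: IND_def)
      have "wf_fm F P A" unfolding A(1) by (rule wf_ind_ax) (use assms(2,3,5) A(2) in auto)
      moreover have "fv_fm A = {}" unfolding A(1) by (rule fv_ind_ax)
      ultimately show ?thesis by simp
    qed
  qed
  obtain N where N: "fv_fm \<phi> \<subseteq> {..<N}"
    using finite_fv_fm[of \<phi>] unfolding finite_nat_set_iff_bounded by blast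
  let ?\<psi> = "(All ^^ N) \<phi>"
  have c\<psi>: "fv_fm ?\<psi> = {}" using N by (auto simp: fv_Alls)
  have w\<psi>: "wf_fm F P ?\<psi>" using assms(6) by (simp add: wf_Alls)
  have np\<psi>: "\<not> prov ?S ?\<psi>"
  proof
    assume "prov ?S ?\<psi>"
    then obtain G where G: "set G \<subseteq> ?S" "nd G ?\<psi>" by (auto simp: prov_def)
    have "\<forall>B\<in>set G. fv_fm B = {}" using G(1) Sw by blast
    then have "nd G \<phi>" using nd_Alls_strip G(2) by blast
    then show False using np G(1) by (auto simp: prov_def)
  qed
  obtain D :: "('f,'p) tm set set" and fI pI where
    M: "is_int D fI" "\<forall>A\<in>?S. \<forall>e. holds D fI pI e A" "\<forall>e. \<not> holds D fI pI e ?\<psi>"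
    using completeness[OF assms(1) assms(2) Sw w\<psi> c\<psi> np\<psi>] by blast
  obtain d0 where d0: "d0 \<in> D" using M(1) by (auto simp: is_int_def)
  have r0: "range (\<lambda>_::nat. d0) \<subseteq> D" using d0 by auto
  have "\<not> holds D fI pI (\<lambda>_. d0) ?\<psi>" using M(3) by blast
  then obtain e where e: "range e \<subseteq> D" "\<not> holds D fI pI e \<phi>"
    using holds_Alls[OF r0, of fI pI N \<phi>] by blast
  let ?J = "fIs D fI pI F"
  have GS: "\<forall>B\<in>GSI_omega F z s \<Gamma> (sk QEx ` T). wf_fm (F \<union> skolems F P) P B \<and>
           (\<forall>e. range e \<subseteq> D \<longrightarrow> holds D ?J pI e B)"
  proof (rule gsi_sound[OF assms(1,2,3) _ assms(5) M(1)])
    show "\<forall>A\<in>T. wf_fm F P A" using assms(4) by blast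
    show "\<forall>A\<in>T. \<forall>e. range e \<subseteq> D \<longrightarrow> holds D fI pI e A" using M(2) by blast
    show "\<forall>A\<in>IND z s \<Gamma>. \<forall>e. range e \<subseteq> D \<longrightarrow> holds D fI pI e A" using M(2) by blast
  qed
  obtain G0 where G0: "set G0 \<subseteq> GSI_omega F z s \<Gamma> (sk QEx ` T)" "nd G0 \<phi>"
    using assms(7) by (auto simp: prov_def)
  have "holds D ?J pI e \<phi>"
  proof (rule soundness[OF G0(2) is_int_fIs[OF M(1)] e(1)])
    show "\<forall>B\<in>set G0. holds D ?J pI e B" using GS G0(1) e(1) by blast
  qed
  then have "holds D fI pI e \<phi>" using holds_agree[OF assms(6)] by blast
  then show False using e(2) by blast
qed

end
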